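(* Let $m\ge 2$ and let $\{\Pi^n\}_{n\ge1}$ be any sequence of parsimonious protocols with $m$ memory states such that $\lim_{n\to\infty}U^R(\Pi^n)=\sup_\Pi U^R(\Pi)$. Exclude the case in which both $\gamma^{m-2}\le\kappa$ and $p=\tfrac12$. Then $\lim_{n\to\infty}U^S(\Pi^n)$ exists and \[ \lim_{n\to\infty}U^S(\Pi^n)= \begin{cases} p+\dfrac{2p-1}{\gamma^{m-2}-1}, & \text{if } \gamma^{m-2}>\kappa,\\[0.6em] 1, & \text{if } \gamma^{m-2}\le\kappa \text{ and } p>\tfrac12,\\[0.3em] 0, & \text{if } \gamma^{m-2}\le\kappa \text{ and } p<\tfrac12. \end{cases} \]
   Context: Setting. The state of nature is $\theta\in\Theta=\{H,L\}$ with prior $\Pr(\theta=H)=p\in(0,1)$. A sender privately observes $\theta$; a receiver does not. $S$ is a finite signal set; conditional on $\theta$, signals are i.i.d. with distribution $\pi_\theta$ on $S$, where $\pi_\theta(s)>0$ for all $s\in S,\theta\in\Theta$, and $\pi_H\neq\pi_L$. The receiver has the set of memory states $M=\{1,\dots,m\}$ and chooses a protocol $\Pi=(f,g,a)$: a transition function $f:M\times S\to\Delta(M)$ ($f(i,s)(j)$ is the probability of moving from memory state $i$ to $j$ after signal $s$), an initial distribution $g\in\Delta(M)$ of $m_0$, and an action rule $a:M\to[0,1]$ (probability of action $H$ if the game ends in that memory state). A sender strategy is $\sigma:M\times\Theta\to[0,1]$, the probability of stopping in the current memory state given $\theta$. Timing: $m_0\sim g$; in each period $t=0,1,\dots$,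 with current memory state $m_t$, the game ends if $m_t$ is absorbing ($f(m_t,s)(m_t)=1$ for all $s$); otherwise the sender stops with probability $\sigma(m_t,\theta)$, ending the game; if not stopped, a signal $s_t\sim\pi_\theta$ is generated and $m_{t+1}\sim f(m_t,s_t)$. When the game ends in state $m_t$ the receiver takes action $H$ with probability $a(m_t)$ and $L$ otherwise. The receiver's payoff is $1$ if the action equals $\theta$ and $0$ otherwise; the sender's payoff is $1$ if the action is $H$ and $0$ otherwise; there is no discounting; if the game never ends both get $0$. $U^S(\Pi,\sigma),U^R(\Pi,\sigma)$ denote expected payoffs, $\mathrm{br}(\Pi)=\arg\sup_\sigma U^S(\Pi,\sigma)$ is the set of sender best responses, and $U^R(\Pi):=U^R(\Pi,\sigma)$, $U^S(\Pi):=U^S(\Pi,\sigma)$ for $\sigma\in\mathrm{br}(\Pi)$. The supremum $\sup_\Pi$ is over all protocols on $M$. Since $\pi_\theta$ has full support, which transitions have positive probability does not depend on $\theta$; absorbing/transient refer to the Markov chain on $M$ induced by $f$ with signals from $\pi_\theta$. A protocol is parsimonious if (i) it has exactly two absorbing memory states, one in which $a=0$ and one in which $a=1$, and (ii) all other memory states are transient with $a=0$. Signal informativeness: $\bar\ell=\max_{s}\pi_H(s)/\pi_L(s)$, $\underline\ell=\min_{s}\pi_H(s)/\pi_L(s)$, $\gamma=\bar\ell/\underline\ell\in(1,\infty)$. Prior skewness: $\kappa=\max\{p/(1-p),(1-p)/p\}$. *)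

theory Defs
  imports Complex_Main
begin

text \<open>States of nature: True = H, False = L.  Memory states M = {1..m}.
  Signals: a finite type 's.  The signal distributions are sg :: bool => 's => real,
  sg True = pi_H, sg False = pi_L.\<close>

record 's protocol =
  trans :: "nat \<Rightarrow> 's \<Rightarrow> nat \<Rightarrow> real"
  init  :: "nat \<Rightarrow> real"
  act   :: "nat \<Rightarrow> real"

definition is_protocol :: "nat \<Rightarrow> 's protocol \<Rightarrow> bool" where
  "is_protocol m P \<longleftrightarrow>
     (\<forall>i\<in>{1..m}. \<forall>s. (\<forall>j\<in>{1..m}. 0 \<le> trans P i s j) \<and> (\<Sum>j=1..m. trans P i s j) = 1) \<and>
     (\<forall>j\<in>{1..m}. 0 \<le> init P j) \<and> (\<Sum>j=1..m. init P j) = 1 \<and>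
     (\<forall>i\<in>{1..m}. 0 \<le> act P i \<and> act P i \<le> 1)"

definition is_strategy :: "nat \<Rightarrow> (nat \<Rightarrow> bool \<Rightarrow> real) \<Rightarrow> bool" where
  "is_strategy m \<sigma> \<longleftrightarrow> (\<forall>i\<in>{1..m}. \<forall>\<theta>. 0 \<le> \<sigma> i \<theta> \<and> \<sigma> i \<theta> \<le> 1)"

definition absorbing :: "'s protocol \<Rightarrow> nat \<Rightarrow> bool" where
  "absorbing P i \<longleftrightarrow> (\<forall>s. trans P i s i = 1)"

definition step :: "nat \<Rightarrow> (bool \<Rightarrow> 's::finite \<Rightarrow> real) \<Rightarrow> 's protocol \<Rightarrow>
    (nat \<Rightarrow> bool \<Rightarrow> real) \<Rightarrow> bool \<Rightarrow> (nat \<Rightarrow> real) \<Rightarrow> (nat \<Rightarrow> real)" where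
  "step m sg P \<sigma> \<theta> q = (\<lambda>j. \<Sum>i\<in>{1..m}.
      (if absorbing P i then 0
       else q i * (1 - \<sigma> i \<theta>) * (\<Sum>s\<in>UNIV. sg \<theta> s * trans P i s j)))"

definition alive :: "nat \<Rightarrow> (bool \<Rightarrow> 's::finite \<Rightarrow> real) \<Rightarrow> 's protocol \<Rightarrow>
    (nat \<Rightarrow> bool \<Rightarrow> real) \<Rightarrow> bool \<Rightarrow> nat \<Rightarrow> nat \<Rightarrow> real" where
  "alive m sg P \<sigma> \<theta> t = (step m sg P \<sigma> \<theta> ^^ t) (init P)"

definition ends :: "nat \<Rightarrow> (bool \<Rightarrow> 's::finite \<Rightarrow> real) \<Rightarrow> 's protocol \<Rightarrow>
    (nat \<Rightarrow> bool \<Rightarrow> real) \<Rightarrow> bool \<Rightarrow> nat \<Rightarrow> nat \<Rightarrow> real" where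
  "ends m sg P \<sigma> \<theta> t i = alive m sg P \<sigma> \<theta> t i * (if absorbing P i then 1 else \<sigma> i \<theta>)"

definition probH :: "nat \<Rightarrow> (bool \<Rightarrow> 's::finite \<Rightarrow> real) \<Rightarrow> 's protocol \<Rightarrow>
    (nat \<Rightarrow> bool \<Rightarrow> real) \<Rightarrow> bool \<Rightarrow> real" where
  "probH m sg P \<sigma> \<theta> = (\<Sum>t. \<Sum>i=1..m. ends m sg P \<sigma> \<theta> t i * act P i)"

definition probL :: "nat \<Rightarrow> (bool \<Rightarrow> 's::finite \<Rightarrow> real) \<Rightarrow> 's protocol \<Rightarrow>
    (nat \<Rightarrow> bool \<Rightarrow> real) \<Rightarrow> bool \<Rightarrow> real" where
  "probL m sg P \<sigma> \<theta> = (\<Sum>t. \<Sum>i=1..m. ends m sg P \<sigma> \<theta> t i * (1 - act P i))"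

definition US :: "nat \<Rightarrow> (bool \<Rightarrow> 's::finite \<Rightarrow> real) \<Rightarrow> real \<Rightarrow> 's protocol \<Rightarrow>
    (nat \<Rightarrow> bool \<Rightarrow> real) \<Rightarrow> real" where
  "US m sg p P \<sigma> = p * probH m sg P \<sigma> True + (1 - p) * probH m sg P \<sigma> False"

definition UR :: "nat \<Rightarrow> (bool \<Rightarrow> 's::finite \<Rightarrow> real) \<Rightarrow> real \<Rightarrow> 's protocol \<Rightarrow>
    (nat \<Rightarrow> bool \<Rightarrow> real) \<Rightarrow> real" where
  "UR m sg p P \<sigma> = p * probH m sg P \<sigma> True + (1 - p) * probL m sg P \<sigma> False"

definition US_val :: "nat \<Rightarrow> (bool \<Rightarrow> 's::finite \<Rightarrow> real) \<Rightarrow> real \<Rightarrow> 's protocol \<Rightarrow> real" where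
  "US_val m sg p P = Sup {US m sg p P \<sigma> | \<sigma>. is_strategy m \<sigma>}"

definition br :: "nat \<Rightarrow> (bool \<Rightarrow> 's::finite \<Rightarrow> real) \<Rightarrow> real \<Rightarrow> 's protocol \<Rightarrow>
    (nat \<Rightarrow> bool \<Rightarrow> real) set" where
  "br m sg p P = {\<sigma>. is_strategy m \<sigma> \<and> US m sg p P \<sigma> = US_val m sg p P}"

text \<open>Receiver payoff under a best response (ties broken in the receiver's favour).\<close>
definition UR_val :: "nat \<Rightarrow> (bool \<Rightarrow> 's::finite \<Rightarrow> real) \<Rightarrow> real \<Rightarrow> 's protocol \<Rightarrow> real" where
  "UR_val m sg p P = Sup {UR m sg p P \<sigma> | \<sigma>. \<sigma> \<in> br m sg p P}"

definition UR_sup :: "nat \<Rightarrow> (bool \<Rightarrow> 's::finite \<Rightarrow> real) \<Rightarrow> real \<Rightarrow> real" where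
  "UR_sup m sg p = Sup {UR_val m sg p P | P. is_protocol m P}"

definition edge :: "nat \<Rightarrow> 's protocol \<Rightarrow> nat \<Rightarrow> nat \<Rightarrow> bool" where
  "edge m P i j \<longleftrightarrow> i \<in> {1..m} \<and> j \<in> {1..m} \<and> (\<exists>s. trans P i s j > 0)"

definition transient :: "nat \<Rightarrow> 's protocol \<Rightarrow> nat \<Rightarrow> bool" where
  "transient m P i \<longleftrightarrow> (\<exists>j. (edge m P)\<^sup>*\<^sup>* i j \<and> \<not> (edge m P)\<^sup>*\<^sup>* j i)"

definition parsimonious :: "nat \<Rightarrow> 's protocol \<Rightarrow> bool" where
  "parsimonious m P \<longleftrightarrow> is_protocol m P \<and>
     (\<exists>i0\<in>{1..m}. \<exists>i1\<in>{1..m}. i0 \<noteq> i1 \<and> {i\<in>{1..m}. absorbing P i} = {i0, i1} \<and>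
        act P i0 = 0 \<and> act P i1 = 1) \<and>
     (\<forall>i\<in>{1..m}. \<not> absorbing P i \<longrightarrow> transient m P i \<and> act P i = 0)"

definition gamma :: "(bool \<Rightarrow> 's::finite \<Rightarrow> real) \<Rightarrow> real" where
  "gamma sg = Max (range (\<lambda>s. sg True s / sg False s)) / Min (range (\<lambda>s. sg True s / sg False s))"

definition kappa :: "real \<Rightarrow> real" where
  "kappa p = max (p / (1 - p)) ((1 - p) / p)"

end

theory Submission
  imports Defs
begin


locale gm =
  fixes m :: nat and sg :: "bool \<Rightarrow> 's::finite \<Rightarrow> real" and P :: "'s protocol"
  assumes proto: "is_protocol m P"
    and pos: "\<And>\<theta> s. sg \<theta> s > 0"
    and psum: "\<And>\<theta>. (\<Sum>s\<in>UNIV. sg \<theta> s) = 1"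
begin

definition Q :: "bool \<Rightarrow> nat \<Rightarrow> nat \<Rightarrow> real" where
  "Q \<theta> i j = (\<Sum>s\<in>UNIV. sg \<theta> s * trans P i s j)"

lemma trans_nonneg: "i \<in> {1..m} \<Longrightarrow> j \<in> {1..m} \<Longrightarrow> 0 \<le> trans P i s j"
  using proto unfolding is_protocol_def by blast

lemma trans_sum: "i \<in> {1..m} \<Longrightarrow> (\<Sum>j=1..m. trans P i s j) = 1"
  using proto unfolding is_protocol_def by blast

lemma init_nonneg: "j \<in> {1..m} \<Longrightarrow> 0 \<le> init P j"
  using proto unfolding is_protocol_def by blast

lemma init_sum: "(\<Sum>j=1..m. init P j) = 1"
  using proto unfolding is_protocol_def by blast

lemma act_bounds: "i \<in> {1..m} \<Longrightarrow> 0 \<le> act P i \<and> act P i \<le> 1"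
  using proto unfolding is_protocol_def by blast

lemma Q_nonneg: "i \<in> {1..m} \<Longrightarrow> j \<in> {1..m} \<Longrightarrow> 0 \<le> Q \<theta> i j"
  unfolding Q_def using trans_nonneg pos by (intro sum_nonneg mult_nonneg_nonneg) (auto intro: less_imp_le)

lemma Q_sum: "i \<in> {1..m} \<Longrightarrow> (\<Sum>j=1..m. Q \<theta> i j) = 1"
proof -
  assume i: "i \<in> {1..m}"
  have "(\<Sum>j=1..m. Q \<theta> i j) = (\<Sum>s\<in>UNIV. sg \<theta> s * (\<Sum>j=1..m. trans P i s j))"
    unfolding Q_def by (simp add: sum.swap[of _ UNIV] sum_distrib_left)
  also have "\<dots> = 1" using trans_sum[OF i] psum by simp
  finally show ?thesis .
qed

lemma Q_pos_iff: "i \<in> {1..m} \<Longrightarrow> j \<in> {1..m} \<Longrightarrow> Q \<theta> i j > 0 \<longleftrightarrow> (\<exists>s. trans P i s j > 0)"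
proof -
  assume i: "i \<in> {1..m}" and j: "j \<in> {1..m}"
  have nn: "\<And>s. 0 \<le> sg \<theta> s * trans P i s j" using trans_nonneg[OF i j] pos by (simp add: less_imp_le)
  have "Q \<theta> i j > 0 \<longleftrightarrow> (\<exists>s\<in>UNIV. 0 < sg \<theta> s * trans P i s j)"
  proof -
    have "Q \<theta> i j \<ge> 0" unfolding Q_def using nn by (intro sum_nonneg) auto
    then have "Q \<theta> i j > 0 \<longleftrightarrow> Q \<theta> i j \<noteq> 0" by auto
    also have "\<dots> \<longleftrightarrow> (\<exists>s\<in>UNIV. sg \<theta> s * trans P i s j \<noteq> 0)"
      unfolding Q_def using sum_nonneg_eq_0_iff[of UNIV "\<lambda>s. sg \<theta> s * trans P i s j"] nn by auto
    also have "\<dots> \<longleftrightarrow> (\<exists>s\<in>UNIV. 0 < sg \<theta> s * trans P i s j)"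
      using nn by (auto simp: less_le)
    finally show ?thesis .
  qed
  also have "\<dots> \<longleftrightarrow> (\<exists>s. trans P i s j > 0)"
  proof
    assume "\<exists>s\<in>UNIV. 0 < sg \<theta> s * trans P i s j"
    then obtain s where "0 < sg \<theta> s * trans P i s j" by blast
    with pos[of \<theta> s] have "0 < trans P i s j" by (simp add: zero_less_mult_iff)
    then show "\<exists>s. trans P i s j > 0" by blast
  next
    assume "\<exists>s. trans P i s j > 0"
    then obtain s where "0 < trans P i s j" by blast
    with pos[of \<theta> s] show "\<exists>s\<in>UNIV. 0 < sg \<theta> s * trans P i s j"
      by (intro bexI[of _ s]) (auto intro: mult_pos_pos)
  qed
  finally show ?thesis .
qed

lemma edge_iff: "edge m P i j \<longleftrightarrow> i \<in> {1..m} \<and> j \<in> {1..m} \<and> Q \<theta> i j > 0"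
  unfolding edge_def using Q_pos_iff by blast

lemma step_eq: "step m sg P \<sigma> \<theta> q j =
   (\<Sum>i\<in>{1..m}. if absorbing P i then 0 else q i * (1 - \<sigma> i \<theta>) * Q \<theta> i j)"
  unfolding step_def Q_def by simp

abbreviation al where "al \<sigma> \<theta> t \<equiv> alive m sg P \<sigma> \<theta> t"

lemma alive_0: "al \<sigma> \<theta> 0 = init P" unfolding alive_def by simp

lemma alive_Suc: "al \<sigma> \<theta> (Suc t) = step m sg P \<sigma> \<theta> (al \<sigma> \<theta> t)"
  unfolding alive_def by simp

lemma alive_Suc_eq: "al \<sigma> \<theta> (Suc t) j =
   (\<Sum>i\<in>{1..m}. if absorbing P i then 0 else al \<sigma> \<theta> t i * (1 - \<sigma> i \<theta>) * Q \<theta> i j)"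
  by (simp add: alive_Suc step_eq)

lemma alive_nonneg: "is_strategy m \<sigma> \<Longrightarrow> j \<in> {1..m} \<Longrightarrow> 0 \<le> al \<sigma> \<theta> t j"
proof (induction t arbitrary: j)
  case 0 then show ?case by (simp add: alive_0 init_nonneg)
next
  case (Suc t)
  show ?case unfolding alive_Suc_eq
    using Suc Q_nonneg unfolding is_strategy_def
    by (intro sum_nonneg) (auto intro!: mult_nonneg_nonneg)
qed

abbreviation ed where "ed \<sigma> \<theta> t i \<equiv> ends m sg P \<sigma> \<theta> t i"

lemma ends_nonneg: "is_strategy m \<sigma> \<Longrightarrow> i \<in> {1..m} \<Longrightarrow> 0 \<le> ed \<sigma> \<theta> t i"
proof -
  assume s: "is_strategy m \<sigma>" and i: "i \<in> {1..m}"
  have "0 \<le> \<sigma> i \<theta>" using s i unfolding is_strategy_def by blast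
  then show ?thesis unfolding ends_def using alive_nonneg[OF s i, of \<theta> t] by simp
qed

definition tot where "tot \<sigma> \<theta> t = (\<Sum>j=1..m. al \<sigma> \<theta> t j)"

lemma tot_Suc: "tot \<sigma> \<theta> (Suc t) = tot \<sigma> \<theta> t - (\<Sum>i=1..m. ed \<sigma> \<theta> t i)"
proof -
  have "tot \<sigma> \<theta> (Suc t) = (\<Sum>i\<in>{1..m}. if absorbing P i then 0 else al \<sigma> \<theta> t i * (1 - \<sigma> i \<theta>) * (\<Sum>j=1..m. Q \<theta> i j))"
    unfolding tot_def alive_Suc_eq
    apply (subst sum.swap)
    apply (rule sum.cong[OF refl])
    subgoal for i by (cases "absorbing P i") (simp_all add: sum_distrib_left)
    done
  also have "\<dots> = (\<Sum>i\<in>{1..m}. if absorbing P i then 0 else al \<sigma> \<theta> t i * (1 - \<sigma> i \<theta>))"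
    apply (rule sum.cong[OF refl]) subgoal for i using Q_sum[of i \<theta>] by simp done
  also have "\<dots> = (\<Sum>i\<in>{1..m}. al \<sigma> \<theta> t i - ed \<sigma> \<theta> t i)"
    unfolding ends_def by (intro sum.cong) (auto simp: algebra_simps)
  also have "\<dots> = tot \<sigma> \<theta> t - (\<Sum>i=1..m. ed \<sigma> \<theta> t i)"
    unfolding tot_def by (simp add: sum_subtractf)
  finally show ?thesis .
qed

lemma tot_0: "tot \<sigma> \<theta> 0 = 1" unfolding tot_def alive_0 using init_sum by simp

lemma tot_nonneg: "is_strategy m \<sigma> \<Longrightarrow> 0 \<le> tot \<sigma> \<theta> t"
  unfolding tot_def using alive_nonneg by (auto intro: sum_nonneg)

lemma ends_partial: "(\<Sum>\<tau><t. \<Sum>i=1..m. ed \<sigma> \<theta> \<tau> i) = 1 - tot \<sigma> \<theta> t"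
  by (induction t) (auto simp: tot_0 tot_Suc)

lemma ends_summable: "is_strategy m \<sigma> \<Longrightarrow> summable (\<lambda>t. \<Sum>i=1..m. ed \<sigma> \<theta> t i)"
  and ends_suminf: "is_strategy m \<sigma> \<Longrightarrow> (\<Sum>t. \<Sum>i=1..m. ed \<sigma> \<theta> t i) \<le> 1"
proof -
  assume s: "is_strategy m \<sigma>"
  have nn: "\<And>t. 0 \<le> (\<Sum>i=1..m. ed \<sigma> \<theta> t i)" using ends_nonneg[OF s] by (auto intro: sum_nonneg)
  have bd: "\<And>t. (\<Sum>\<tau><t. \<Sum>i=1..m. ed \<sigma> \<theta> \<tau> i) \<le> 1" using ends_partial tot_nonneg[OF s] by simp
  show "summable (\<lambda>t. \<Sum>i=1..m. ed \<sigma> \<theta> t i)"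
    by (rule summableI_nonneg_bounded[where x=1]) (use nn bd in auto)
  then show "(\<Sum>t. \<Sum>i=1..m. ed \<sigma> \<theta> t i) \<le> 1"
    by (rule suminf_le_const) (use bd in auto)
qed


lemma probH_summable: "is_strategy m \<sigma> \<Longrightarrow> summable (\<lambda>t. \<Sum>i=1..m. ed \<sigma> \<theta> t i * act P i)"
proof -
  assume s: "is_strategy m \<sigma>"
  show ?thesis
  proof (rule summable_comparison_test'[OF ends_summable[OF s, of \<theta>]])
    fix t
    have "0 \<le> (\<Sum>i=1..m. ed \<sigma> \<theta> t i * act P i)"
      using ends_nonneg[OF s] act_bounds by (intro sum_nonneg mult_nonneg_nonneg) auto
    moreover have "(\<Sum>i=1..m. ed \<sigma> \<theta> t i * act P i) \<le> (\<Sum>i=1..m. ed \<sigma> \<theta> t i)"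
      using ends_nonneg[OF s] act_bounds by (intro sum_mono) (simp add: mult_left_le)
    ultimately show "norm (\<Sum>i=1..m. ed \<sigma> \<theta> t i * act P i) \<le> (\<Sum>i=1..m. ed \<sigma> \<theta> t i)" by simp
  qed
qed

lemma probL_summable: "is_strategy m \<sigma> \<Longrightarrow> summable (\<lambda>t. \<Sum>i=1..m. ed \<sigma> \<theta> t i * (1 - act P i))"
proof -
  assume s: "is_strategy m \<sigma>"
  show ?thesis
  proof (rule summable_comparison_test'[OF ends_summable[OF s, of \<theta>]])
    fix t
    have "0 \<le> (\<Sum>i=1..m. ed \<sigma> \<theta> t i * (1 - act P i))"
      using ends_nonneg[OF s] act_bounds by (intro sum_nonneg mult_nonneg_nonneg) auto
    moreover have "(\<Sum>i=1..m. ed \<sigma> \<theta> t i * (1 - act P i)) \<le> (\<Sum>i=1..m. ed \<sigma> \<theta> t i)"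
      using ends_nonneg[OF s] act_bounds by (intro sum_mono) (simp add: mult_left_le)
    ultimately show "norm (\<Sum>i=1..m. ed \<sigma> \<theta> t i * (1 - act P i)) \<le> (\<Sum>i=1..m. ed \<sigma> \<theta> t i)" by simp
  qed
qed

lemma probH_nonneg: "is_strategy m \<sigma> \<Longrightarrow> 0 \<le> probH m sg P \<sigma> \<theta>"
  unfolding probH_def
  by (rule suminf_nonneg[OF probH_summable]) (use ends_nonneg act_bounds in \<open>auto intro!: sum_nonneg mult_nonneg_nonneg\<close>)

lemma probL_nonneg: "is_strategy m \<sigma> \<Longrightarrow> 0 \<le> probL m sg P \<sigma> \<theta>"
  unfolding probL_def
  by (rule suminf_nonneg[OF probL_summable]) (use ends_nonneg act_bounds in \<open>auto intro!: sum_nonneg mult_nonneg_nonneg\<close>)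

lemma probHL_sum: "is_strategy m \<sigma> \<Longrightarrow> probH m sg P \<sigma> \<theta> + probL m sg P \<sigma> \<theta> \<le> 1"
proof -
  assume s: "is_strategy m \<sigma>"
  have "probH m sg P \<sigma> \<theta> + probL m sg P \<sigma> \<theta> =
     (\<Sum>t. (\<Sum>i=1..m. ed \<sigma> \<theta> t i * act P i) + (\<Sum>i=1..m. ed \<sigma> \<theta> t i * (1 - act P i)))"
    unfolding probH_def probL_def using suminf_add[OF probH_summable[OF s] probL_summable[OF s]] by simp
  also have "\<dots> = (\<Sum>t. \<Sum>i=1..m. ed \<sigma> \<theta> t i)"
    by (simp add: sum.distrib[symmetric] algebra_simps)
  also have "\<dots> \<le> 1" using ends_suminf[OF s] .
  finally show ?thesis .
qed

lemma probH_le1: "is_strategy m \<sigma> \<Longrightarrow> probH m sg P \<sigma> \<theta> \<le> 1"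
  using probHL_sum probL_nonneg by (smt (verit))

lemma probL_le1: "is_strategy m \<sigma> \<Longrightarrow> probL m sg P \<sigma> \<theta> \<le> 1"
  using probHL_sum probH_nonneg by (smt (verit))

lemma UR_bounds: "is_strategy m \<sigma> \<Longrightarrow> 0 \<le> p \<Longrightarrow> p \<le> 1 \<Longrightarrow> 0 \<le> UR m sg p P \<sigma> \<and> UR m sg p P \<sigma> \<le> 1"
proof -
  assume s: "is_strategy m \<sigma>" and p: "0 \<le> p" "p \<le> 1"
  have a: "0 \<le> probH m sg P \<sigma> True" "probH m sg P \<sigma> True \<le> 1"
    "0 \<le> probL m sg P \<sigma> False" "probL m sg P \<sigma> False \<le> 1"
    using probH_nonneg[OF s] probH_le1[OF s] probL_nonneg[OF s] probL_le1[OF s] by auto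
  have "p * probH m sg P \<sigma> True \<le> p" using a p by (simp add: mult_left_le)
  moreover have "(1-p) * probL m sg P \<sigma> False \<le> 1 - p" using a p by (simp add: mult_left_le)
  ultimately show ?thesis unfolding UR_def using a p by (auto intro!: add_nonneg_nonneg mult_nonneg_nonneg)
qed

end

lemma UR_val_bdd:
  assumes "is_protocol m P" "0 \<le> p" "p \<le> 1"
    "\<And>\<theta> s. sg \<theta> s > 0" "\<And>\<theta>. (\<Sum>s\<in>UNIV. sg \<theta> s) = 1"
  shows "UR_val m sg p P \<le> max 1 (Sup ({}::real set))"
proof -
  interpret gm m sg P using assms by unfold_locales auto
  show ?thesis
  proof (cases "br m sg p P = {}")
    case True then show ?thesis unfolding UR_val_def by simp
  next
    case False
    have "Sup {UR m sg p P \<sigma> | \<sigma>. \<sigma> \<in> br m sg p P} \<le> 1"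
      using False UR_bounds assms(2,3) unfolding br_def by (intro cSup_least) auto
    then show ?thesis unfolding UR_val_def by simp
  qed
qed

lemma UR_sup_ge:
  assumes "is_protocol m P" "0 \<le> p" "p \<le> 1"
    "\<And>\<theta> s. sg \<theta> s > 0" "\<And>\<theta>. (\<Sum>s\<in>UNIV. sg \<theta> s) = 1"
  shows "UR_val m sg p P \<le> UR_sup m sg p"
  unfolding UR_sup_def
proof (rule cSup_upper)
  show "UR_val m sg p P \<in> {UR_val m sg p P |P. is_protocol m P}" using assms(1) by blast
  show "bdd_above {UR_val m sg p P |P. is_protocol m P}"
  proof (rule bdd_aboveI)
    fix x assume "x \<in> {UR_val m sg p P |P. is_protocol m P}"
    then obtain P' where "is_protocol m P'" "x = UR_val m sg p P'" by blast
    then show "x \<le> max 1 (Sup {})" using UR_val_bdd[of m P' p sg] assms(2-5) by simp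
  qed
qed


definition sig0 :: "nat \<Rightarrow> bool \<Rightarrow> real" where "sig0 = (\<lambda>_ _. 0)"

lemma strat_sig0: "is_strategy m sig0" unfolding is_strategy_def sig0_def by simp

locale pm = gm +
  fixes i0 i1 :: nat
  assumes i0: "i0 \<in> {1..m}" and i1: "i1 \<in> {1..m}" and i01: "i0 \<noteq> i1"
    and absset: "{i\<in>{1..m}. absorbing P i} = {i0, i1}"
    and act0: "act P i0 = 0" and act1: "act P i1 = 1"
    and nonabs: "\<And>i. i \<in> {1..m} \<Longrightarrow> \<not> absorbing P i \<Longrightarrow> transient m P i \<and> act P i = 0"
begin

definition T where "T = {1..m} - {i0, i1}"

lemma T_fin: "finite T" unfolding T_def by simp
lemma T_sub: "T \<subseteq> {1..m}" unfolding T_def by auto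
lemma abs0: "absorbing P i0" using absset i0 by blast
lemma abs1: "absorbing P i1" using absset i1 by blast
lemma T_nabs: "i \<in> T \<Longrightarrow> \<not> absorbing P i" using absset unfolding T_def by blast
lemma T_act: "i \<in> T \<Longrightarrow> act P i = 0" using nonabs T_nabs T_sub by blast
lemma i0T: "i0 \<notin> T" and i1T: "i1 \<notin> T" unfolding T_def by auto
lemma range_split: "{1..m} = insert i0 (insert i1 T)" using i0 i1 unfolding T_def by auto
lemma abs_iff: "i \<in> {1..m} \<Longrightarrow> absorbing P i \<longleftrightarrow> i = i0 \<or> i = i1"
  using absset by blast

lemma sum_split: "(\<Sum>i\<in>{1..m}. f i) = f i0 + f i1 + (\<Sum>i\<in>T. f i)"
  apply (subst range_split)
  using i01 i0T i1T T_fin by (simp add: add.assoc)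

lemma alive_Suc0: "al sig0 \<theta> (Suc t) j = (\<Sum>i\<in>T. al sig0 \<theta> t i * Q \<theta> i j)"
  unfolding alive_Suc_eq sum_split using abs0 abs1 T_nabs
  by (auto simp: sig0_def intro!: sum.cong)

lemma alive_mono: "is_strategy m \<sigma> \<Longrightarrow> j \<in> {1..m} \<Longrightarrow> al \<sigma> \<theta> t j \<le> al sig0 \<theta> t j"
proof (induction t arbitrary: j)
  case 0 then show ?case by (simp add: alive_0)
next
  case (Suc t)
  have "al \<sigma> \<theta> (Suc t) j = (\<Sum>i\<in>{1..m}. if absorbing P i then 0 else al \<sigma> \<theta> t i * (1 - \<sigma> i \<theta>) * Q \<theta> i j)"
    by (rule alive_Suc_eq)
  also have "\<dots> \<le> (\<Sum>i\<in>{1..m}. if absorbing P i then 0 else al sig0 \<theta> t i * (1 - sig0 i \<theta>) * Q \<theta> i j)"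
  proof (rule sum_mono)
    fix i assume i: "i \<in> {1..m}"
    have a: "0 \<le> al \<sigma> \<theta> t i" "al \<sigma> \<theta> t i \<le> al sig0 \<theta> t i" using alive_nonneg[OF Suc.prems(1) i] Suc.IH[OF Suc.prems(1) i] by auto
    have b: "0 \<le> \<sigma> i \<theta>" "\<sigma> i \<theta> \<le> 1" using Suc.prems(1) i unfolding is_strategy_def by auto
    have q: "0 \<le> Q \<theta> i j" using Q_nonneg[OF i Suc.prems(2)] .
    have "al \<sigma> \<theta> t i * (1 - \<sigma> i \<theta>) \<le> al sig0 \<theta> t i"
    proof -
      have "al \<sigma> \<theta> t i * (1 - \<sigma> i \<theta>) \<le> al \<sigma> \<theta> t i * 1"
        by (rule mult_left_mono) (use a b in auto)
      then show ?thesis using a by simp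
    qed
    then have "al \<sigma> \<theta> t i * (1 - \<sigma> i \<theta>) * Q \<theta> i j \<le> al sig0 \<theta> t i * Q \<theta> i j"
      using q by (rule mult_right_mono)
    then show "(if absorbing P i then 0 else al \<sigma> \<theta> t i * (1 - \<sigma> i \<theta>) * Q \<theta> i j)
       \<le> (if absorbing P i then 0 else al sig0 \<theta> t i * (1 - sig0 i \<theta>) * Q \<theta> i j)"
      by (simp add: sig0_def)
  qed
  also have "\<dots> = al sig0 \<theta> (Suc t) j" by (rule alive_Suc_eq[symmetric])
  finally show ?case .
qed

lemma probH_term: "(\<Sum>i=1..m. ed \<sigma> \<theta> t i * act P i) = al \<sigma> \<theta> t i1"
  unfolding sum_split using abs1 act0 act1 T_act by (simp add: ends_def)

lemma probL_term0: "(\<Sum>i=1..m. ed sig0 \<theta> t i * (1 - act P i)) = al sig0 \<theta> t i0"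
  unfolding sum_split using abs0 act0 act1 T_act T_nabs by (simp add: ends_def sig0_def)

lemma probH_eq: "probH m sg P \<sigma> \<theta> = (\<Sum>t. al \<sigma> \<theta> t i1)"
  unfolding probH_def probH_term ..

lemma summable_i1: "is_strategy m \<sigma> \<Longrightarrow> summable (\<lambda>t. al \<sigma> \<theta> t i1)"
  using probH_summable[of \<sigma> \<theta>] unfolding probH_term .

lemma probL_eq0: "probL m sg P sig0 \<theta> = (\<Sum>t. al sig0 \<theta> t i0)"
  unfolding probL_def probL_term0 ..

lemma summable_i0: "summable (\<lambda>t. al sig0 \<theta> t i0)"
  using probL_summable[OF strat_sig0, of \<theta>] unfolding probL_term0 .

lemma probH_mono: "is_strategy m \<sigma> \<Longrightarrow> probH m sg P \<sigma> \<theta> \<le> probH m sg P sig0 \<theta>"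
  unfolding probH_eq
  by (rule suminf_le[OF _ summable_i1 summable_i1[OF strat_sig0]]) (use alive_mono i1 in auto)

lemma US_le: "is_strategy m \<sigma> \<Longrightarrow> 0 \<le> p \<Longrightarrow> p \<le> 1 \<Longrightarrow> US m sg p P \<sigma> \<le> US m sg p P sig0"
  unfolding US_def using probH_mono
  by (intro add_mono mult_left_mono) auto

lemma US_val_eq: "0 \<le> p \<Longrightarrow> p \<le> 1 \<Longrightarrow> US_val m sg p P = US m sg p P sig0"
  unfolding US_val_def
  by (rule cSup_eq_maximum) (use strat_sig0 US_le in auto)

lemma sig0_br: "0 \<le> p \<Longrightarrow> p \<le> 1 \<Longrightarrow> sig0 \<in> br m sg p P"
  unfolding br_def using strat_sig0 US_val_eq by auto

lemma br_probH: assumes "0 < p" "p < 1" "\<sigma> \<in> br m sg p P"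
  shows "probH m sg P \<sigma> \<theta> = probH m sg P sig0 \<theta>"
proof -
  have s: "is_strategy m \<sigma>" and e: "US m sg p P \<sigma> = US m sg p P sig0"
    using assms US_val_eq unfolding br_def by auto
  have a: "probH m sg P \<sigma> True \<le> probH m sg P sig0 True" "probH m sg P \<sigma> False \<le> probH m sg P sig0 False"
    using probH_mono[OF s] by auto
  have "p * probH m sg P \<sigma> True \<le> p * probH m sg P sig0 True"
    "(1-p) * probH m sg P \<sigma> False \<le> (1-p) * probH m sg P sig0 False"
    using a assms(1,2) by (auto intro: mult_left_mono)
  with e have "p * probH m sg P \<sigma> True = p * probH m sg P sig0 True"
    "(1-p) * probH m sg P \<sigma> False = (1-p) * probH m sg P sig0 False"
    unfolding US_def by linarith+
  then show ?thesis using assms(1,2) by (cases \<theta>) auto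
qed

lemma UR_val_bounds: assumes "0 < p" "p < 1"
  shows "UR m sg p P sig0 \<le> UR_val m sg p P"
    and "UR_val m sg p P \<le> p * probH m sg P sig0 True + (1 - p) * (1 - probH m sg P sig0 False)"
proof -
  let ?X = "{UR m sg p P \<sigma> | \<sigma>. \<sigma> \<in> br m sg p P}"
  have bd: "\<And>x. x \<in> ?X \<Longrightarrow> x \<le> p * probH m sg P sig0 True + (1 - p) * (1 - probH m sg P sig0 False)"
  proof -
    fix x assume "x \<in> ?X"
    then obtain \<sigma> where x: "x = UR m sg p P \<sigma>" and b: "\<sigma> \<in> br m sg p P" by blast
    have s: "is_strategy m \<sigma>" using b unfolding br_def by auto
    have "probL m sg P \<sigma> False \<le> 1 - probH m sg P \<sigma> False" using probHL_sum[OF s, of False] by simp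
    then have "probL m sg P \<sigma> False \<le> 1 - probH m sg P sig0 False" using br_probH[OF assms b] by simp
    then show "x \<le> p * probH m sg P sig0 True + (1 - p) * (1 - probH m sg P sig0 False)"
      unfolding x UR_def using br_probH[OF assms b, of True] assms by (simp add: mult_left_mono)
  qed
  have ne: "UR m sg p P sig0 \<in> ?X" using sig0_br assms by auto
  show "UR m sg p P sig0 \<le> UR_val m sg p P" unfolding UR_val_def
    by (rule cSup_upper[OF ne], rule bdd_aboveI, rule bd, assumption)
  show "UR_val m sg p P \<le> p * probH m sg P sig0 True + (1 - p) * (1 - probH m sg P sig0 False)"
    unfolding UR_val_def by (rule cSup_least) (use ne bd in auto)
qed

end


context pm
begin

lemma T_ge1[simp]: "i \<in> T \<Longrightarrow> Suc 0 \<le> i" and T_lem[simp]: "i \<in> T \<Longrightarrow> i \<le> m"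
  using T_sub by auto
lemma i0_ge1[simp]: "Suc 0 \<le> i0" and i0_lem[simp]: "i0 \<le> m"
  and i1_ge1[simp]: "Suc 0 \<le> i1" and i1_lem[simp]: "i1 \<le> m"
  using i0 i1 by auto

lemma stp_eq: "step m sg P sig0 \<theta> q j = (\<Sum>i\<in>T. q i * Q \<theta> i j)"
  unfolding step_eq sum_split using abs0 abs1 T_nabs
  by (auto simp: sig0_def intro!: sum.cong)

definition it :: "bool \<Rightarrow> nat \<Rightarrow> (nat \<Rightarrow> real) \<Rightarrow> nat \<Rightarrow> real" where
  "it \<theta> n q = (step m sg P sig0 \<theta> ^^ n) q"

lemma it_0: "it \<theta> 0 q = q" unfolding it_def by simp
lemma it_Suc: "it \<theta> (Suc n) q j = (\<Sum>i\<in>T. it \<theta> n q i * Q \<theta> i j)"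
  unfolding it_def by (simp add: stp_eq)
lemma it_Suc_right: "it \<theta> (Suc n) q = it \<theta> n (step m sg P sig0 \<theta> q)"
  unfolding it_def by (simp add: funpow_Suc_right del: funpow.simps)
lemma it_add: "it \<theta> (a + b) q = it \<theta> a (it \<theta> b q)"
  unfolding it_def by (simp add: funpow_add)
lemma alive_it: "al sig0 \<theta> t = it \<theta> t (init P)"
  unfolding it_def alive_def ..

definition K :: "bool \<Rightarrow> nat \<Rightarrow> nat \<Rightarrow> nat \<Rightarrow> real" where
  "K \<theta> n i = it \<theta> n (\<lambda>j. if j = i then 1 else 0)"

lemma it_lin: "j \<in> {1..m} \<Longrightarrow> it \<theta> n q j = (\<Sum>i\<in>{1..m}. q i * K \<theta> n i j)"
proof (induction n arbitrary: j)
  case 0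
  have "(\<Sum>i\<in>{1..m}. q i * K \<theta> 0 i j) = (\<Sum>i\<in>{1..m}. if i = j then q j else 0)"
    unfolding K_def it_0 by (intro sum.cong) auto
  also have "\<dots> = q j" using 0 by simp
  finally show ?case by (simp add: it_0)
next
  case (Suc n)
  have "it \<theta> (Suc n) q j = (\<Sum>l\<in>T. (\<Sum>i\<in>{1..m}. q i * K \<theta> n i l) * Q \<theta> l j)"
    unfolding it_Suc using Suc.IH T_sub by (intro sum.cong) auto
  also have "\<dots> = (\<Sum>i\<in>{1..m}. q i * (\<Sum>l\<in>T. K \<theta> n i l * Q \<theta> l j))"
    by (simp add: sum_distrib_left sum_distrib_right sum.swap[of _ T] mult.assoc)
  also have "\<dots> = (\<Sum>i\<in>{1..m}. q i * K \<theta> (Suc n) i j)"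
    unfolding K_def it_Suc ..
  finally show ?case .
qed

lemma K_nonneg: "j \<in> {1..m} \<Longrightarrow> 0 \<le> K \<theta> n i j"
proof (induction n arbitrary: j)
  case 0 then show ?case by (simp add: K_def it_0)
next
  case (Suc n) then show ?case
    unfolding K_def it_Suc using T_sub Q_nonneg
    by (intro sum_nonneg mult_nonneg_nonneg) (auto simp: K_def)
qed

lemma K_Suc_back: "i \<in> T \<Longrightarrow> j \<in> {1..m} \<Longrightarrow> K \<theta> (Suc n) i j = (\<Sum>l\<in>{1..m}. Q \<theta> i l * K \<theta> n l j)"
proof -
  assume i: "i \<in> T" and j: "j \<in> {1..m}"
  have "K \<theta> (Suc n) i j = it \<theta> n (step m sg P sig0 \<theta> (\<lambda>j. if j = i then 1 else 0)) j"
    unfolding K_def it_Suc_right ..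
  also have "\<dots> = (\<Sum>l\<in>{1..m}. step m sg P sig0 \<theta> (\<lambda>j. if j = i then 1 else 0) l * K \<theta> n l j)"
    using it_lin[OF j] .
  also have "\<dots> = (\<Sum>l\<in>{1..m}. Q \<theta> i l * K \<theta> n l j)"
  proof (rule sum.cong[OF refl])
    fix l
    have "(\<Sum>i'\<in>T. (if i' = i then 1 else 0) * Q \<theta> i' l) = (\<Sum>i'\<in>T. if i' = i then Q \<theta> i' l else 0)"
      by (rule sum.cong) auto
    also have "\<dots> = Q \<theta> i l" using i T_fin by (simp add: sum.delta)
    finally show "step m sg P sig0 \<theta> (\<lambda>j. if j = i then 1 else 0) l * K \<theta> n l j = Q \<theta> i l * K \<theta> n l j"
      unfolding stp_eq by simp
  qed
  finally show ?thesis .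
qed

lemma K_abs: "l \<notin> T \<Longrightarrow> j \<in> T \<Longrightarrow> K \<theta> n l j = 0"
proof (cases n)
  case 0 then show "l \<notin> T \<Longrightarrow> j \<in> T \<Longrightarrow> ?thesis" by (auto simp: K_def it_0)
next
  case (Suc n')
  assume l: "l \<notin> T"
  have "step m sg P sig0 \<theta> (\<lambda>j. if j = l then 1 else 0) = (\<lambda>_. 0)"
  proof (rule ext)
    fix x
    show "step m sg P sig0 \<theta> (\<lambda>j. if j = l then 1 else 0) x = 0"
      unfolding stp_eq using l by (intro sum.neutral) auto
  qed
  moreover have "it \<theta> n' (\<lambda>_. 0) = (\<lambda>_. 0)"
    by (induction n') (auto simp: it_0 it_Suc)
  ultimately show ?thesis unfolding K_def Suc it_Suc_right by simp
qed

definition sv :: "bool \<Rightarrow> nat \<Rightarrow> nat \<Rightarrow> real" where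
  "sv \<theta> n i = (\<Sum>j\<in>T. K \<theta> n i j)"

lemma sv_0: "i \<in> T \<Longrightarrow> sv \<theta> 0 i = 1"
  unfolding sv_def K_def it_0 using T_fin by simp

lemma sv_abs: "l \<notin> T \<Longrightarrow> sv \<theta> n l = 0"
  unfolding sv_def using K_abs by simp

lemma sv_Suc: "i \<in> T \<Longrightarrow> sv \<theta> (Suc n) i = (\<Sum>l\<in>T. Q \<theta> i l * sv \<theta> n l)"
proof -
  assume i: "i \<in> T"
  have "sv \<theta> (Suc n) i = (\<Sum>j\<in>T. \<Sum>l\<in>{1..m}. Q \<theta> i l * K \<theta> n l j)"
    unfolding sv_def using K_Suc_back[OF i] T_sub by (intro sum.cong) auto
  also have "\<dots> = (\<Sum>l\<in>{1..m}. Q \<theta> i l * sv \<theta> n l)"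
    unfolding sv_def by (simp add: sum_distrib_left sum.swap[of _ T])
  also have "\<dots> = (\<Sum>l\<in>T. Q \<theta> i l * sv \<theta> n l)"
    unfolding sum_split using sv_abs i0T i1T by simp
  finally show ?thesis .
qed

lemma QT_sum: "i \<in> {1..m} \<Longrightarrow> (\<Sum>l\<in>T. Q \<theta> i l) = 1 - Q \<theta> i i0 - Q \<theta> i i1"
  using Q_sum[of i \<theta>] unfolding sum_split by simp

lemma QT_le1: "i \<in> {1..m} \<Longrightarrow> (\<Sum>l\<in>T. Q \<theta> i l) \<le> 1"
  using QT_sum Q_nonneg i0 i1 by (smt (verit))

lemma sv_nonneg: "0 \<le> sv \<theta> n i"
  unfolding sv_def using K_nonneg T_sub by (auto intro: sum_nonneg)

lemma sv_le1: "sv \<theta> n i \<le> 1"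
proof (induction n arbitrary: i)
  case 0 show ?case
  proof (cases "i \<in> T")
    case True then show ?thesis using sv_0 by simp
  next
    case False then show ?thesis using sv_abs by simp
  qed
next
  case (Suc n) show ?case
  proof (cases "i \<in> T")
    case True
    have "sv \<theta> (Suc n) i \<le> (\<Sum>l\<in>T. Q \<theta> i l)"
      unfolding sv_Suc[OF True] using Suc.IH Q_nonneg True T_sub
      by (intro sum_mono) (auto intro: mult_left_le)
    also have "\<dots> \<le> 1" using QT_le1 True T_sub by auto
    finally show ?thesis .
  next
    case False then show ?thesis using sv_abs by simp
  qed
qed

lemma sv_dec1: "sv \<theta> (Suc n) i \<le> sv \<theta> n i"
proof (induction n arbitrary: i)
  case 0 show ?case
  proof (cases "i \<in> T")
    case True then show ?thesis using sv_le1 sv_0 by simp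
  next
    case False then show ?thesis using sv_abs by simp
  qed
next
  case (Suc n) show ?case
  proof (cases "i \<in> T")
    case True
    show ?thesis unfolding sv_Suc[OF True] using Suc.IH Q_nonneg True T_sub
      by (intro sum_mono mult_left_mono) auto
  next
    case False then show ?thesis using sv_abs by simp
  qed
qed

lemma sv_dec: "a \<le> b \<Longrightarrow> sv \<theta> b i \<le> sv \<theta> a i"
proof (induction b)
  case 0 then show ?case by simp
next
  case (Suc b) then show ?case using sv_dec1[of \<theta> b i]
    by (cases "a = Suc b") (auto simp: le_Suc_eq)
qed

lemma reach_fin: "finite {j. (edge m P)\<^sup>*\<^sup>* x j}"
proof -
  have "{j. (edge m P)\<^sup>*\<^sup>* x j} \<subseteq> insert x {1..m}"
  proof
    fix j assume "j \<in> {j. (edge m P)\<^sup>*\<^sup>* x j}"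
    then have "(edge m P)\<^sup>*\<^sup>* x j" by simp
    then show "j \<in> insert x {1..m}"
      by (cases rule: rtranclp.cases) (auto simp: edge_def)
  qed
  then show ?thesis by (rule finite_subset) simp
qed

lemma closed_reach: "(edge m P)\<^sup>*\<^sup>* x j \<Longrightarrow> x \<in> X \<Longrightarrow> (\<forall>x\<in>X. \<forall>j. edge m P x j \<longrightarrow> j \<in> X) \<Longrightarrow> j \<in> X"
  by (induction rule: rtranclp_induct) auto

lemma no_closed:
  assumes X: "X \<subseteq> T" "X \<noteq> {}" and cl: "\<forall>x\<in>X. \<forall>j. edge m P x j \<longrightarrow> j \<in> X"
  shows False
proof -
  let ?R = "\<lambda>x. {j. (edge m P)\<^sup>*\<^sup>* x j}"
  obtain x0 where "x0 \<in> X" using X by blast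
  then obtain x where x: "x \<in> X" and mn: "\<And>y. y \<in> X \<Longrightarrow> card (?R x) \<le> card (?R y)"
    using ex_has_least_nat[of "\<lambda>x. x \<in> X" x0 "\<lambda>x. card (?R x)"] by blast
  have xT: "x \<in> T" using x X by auto
  then have "transient m P x" using nonabs T_sub T_nabs by blast
  then obtain j where xj: "(edge m P)\<^sup>*\<^sup>* x j" and jx: "\<not> (edge m P)\<^sup>*\<^sup>* j x"
    unfolding transient_def by blast
  have jX: "j \<in> X" using closed_reach[OF xj x cl] .
  have sub: "?R j \<subseteq> ?R x" using xj by (auto intro: rtranclp_trans)
  have "x \<in> ?R x" by simp
  moreover have "x \<notin> ?R j" using jx by simp
  ultimately have "?R j \<subset> ?R x" using sub by blast
  then have "card (?R j) < card (?R x)" using reach_fin by (rule psubset_card_mono[rotated])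
  with mn[OF jX] show False by simp
qed

lemma sv_lt1_ex: "i \<in> T \<Longrightarrow> \<exists>n. sv \<theta> n i < 1"
proof (rule ccontr)
  assume iT: "i \<in> T" and nex: "\<not> (\<exists>n. sv \<theta> n i < 1)"
  let ?X = "{i\<in>T. \<forall>n. sv \<theta> n i = 1}"
  have iX: "i \<in> ?X" using iT nex sv_le1[of \<theta> _ i] by (auto simp: not_less intro: antisym)
  have cl: "\<forall>x\<in>?X. \<forall>j. edge m P x j \<longrightarrow> j \<in> ?X"
  proof (intro ballI allI impI)
    fix x j assume xX: "x \<in> ?X" and e: "edge m P x j"
    have xr: "x \<in> {1..m}" and jr: "j \<in> {1..m}" and qpos: "Q \<theta> x j > 0"
      using e edge_iff by auto
    have xT: "x \<in> T" using xX by simp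
    show "j \<in> ?X"
    proof (rule ccontr)
      assume jn: "j \<notin> ?X"
      show False
      proof (cases "j \<in> T")
        case False
        then have "j = i0 \<or> j = i1" using jr unfolding T_def by auto
        then have "(\<Sum>l\<in>T. Q \<theta> x l) < 1" using QT_sum[OF xr, where \<theta>=\<theta>] qpos Q_nonneg[OF xr i0, where \<theta>=\<theta>] Q_nonneg[OF xr i1, where \<theta>=\<theta>] by auto
        moreover have "sv \<theta> 1 x \<le> (\<Sum>l\<in>T. Q \<theta> x l)"
          using sv_Suc[OF xT, where n=0] sv_le1 Q_nonneg xr T_sub
          by (simp) (intro sum_mono, auto intro: mult_left_le)
        ultimately show False using xX by auto
      next
        case True
        then obtain n where "sv \<theta> n j \<noteq> 1" using jn by auto
        then have lt: "sv \<theta> n j < 1" using sv_le1[of \<theta> n j] by simp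
        have "sv \<theta> (Suc n) x < (\<Sum>l\<in>T. Q \<theta> x l)"
          unfolding sv_Suc[OF xT]
        proof (rule sum_strict_mono_ex1[OF T_fin])
          show "\<forall>l\<in>T. Q \<theta> x l * sv \<theta> n l \<le> Q \<theta> x l"
            using sv_le1 Q_nonneg xr T_sub by (auto intro: mult_left_le)
          show "\<exists>l\<in>T. Q \<theta> x l * sv \<theta> n l < Q \<theta> x l"
            using True lt qpos by (intro bexI[of _ j]) auto
        qed
        also have "\<dots> \<le> 1" using QT_le1 xr by simp
        finally show False using xX by auto
      qed
    qed
  qed
  show False using no_closed[of ?X] cl iX by blast
qed

lemma sv_unif: "\<exists>N c. N \<ge> 1 \<and> 0 < c \<and> c < 1 \<and> (\<forall>i\<in>T. sv \<theta> N i \<le> c)"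
proof -
  have "\<forall>i\<in>T. \<exists>n. sv \<theta> n i < 1" using sv_lt1_ex by blast
  from bchoice[OF this] obtain f where f: "\<forall>i\<in>T. sv \<theta> (f i) i < 1" by blast
  define N where "N = Suc (\<Sum>i\<in>T. f i)"
  have fN: "f i \<le> N" if i: "i \<in> T" for i
  proof -
    have "f i \<le> (\<Sum>i\<in>T. f i)" using member_le_sum[of i T f] i T_fin by simp
    then show ?thesis unfolding N_def by simp
  qed
  have lt: "sv \<theta> N i < 1" if i: "i \<in> T" for i
  proof -
    have "sv \<theta> N i \<le> sv \<theta> (f i) i" by (rule sv_dec[OF fN[OF i]])
    moreover have "sv \<theta> (f i) i < 1" using f i by blast
    ultimately show ?thesis by linarith
  qed
  define c where "c = Max (insert (1/2) (sv \<theta> N ` T))"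
  have c1: "c < 1" unfolding c_def using T_fin lt by (subst Max_less_iff) auto
  have "1/2 \<le> c" unfolding c_def using T_fin by (intro Max_ge) auto
  then have c0: "0 < c" by simp
  have "\<forall>i\<in>T. sv \<theta> N i \<le> c" unfolding c_def using T_fin by (auto intro: Max_ge)
  then show ?thesis using c0 c1 by (intro exI[of _ N] exI[of _ c]) (auto simp: N_def)
qed

end


context pm
begin

definition tau where "tau \<theta> t = (\<Sum>j\<in>T. al sig0 \<theta> t j)"

lemma al0_nonneg: "j \<in> {1..m} \<Longrightarrow> 0 \<le> al sig0 \<theta> t j"
  using alive_nonneg[OF strat_sig0] .

lemma al0_nonnegT: "j \<in> T \<Longrightarrow> 0 \<le> al sig0 \<theta> t j"
  using al0_nonneg T_sub by auto

lemma tau_nonneg: "0 \<le> tau \<theta> t"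
  unfolding tau_def using al0_nonnegT by (auto intro: sum_nonneg)

lemma tau_le1: "tau \<theta> t \<le> 1"
proof -
  have "tau \<theta> t \<le> tot sig0 \<theta> t"
    unfolding tau_def tot_def sum_split using al0_nonneg i0 i1 by simp
  also have "\<dots> \<le> 1"
  proof -
    have "0 \<le> (\<Sum>\<tau><t. \<Sum>i=1..m. ed sig0 \<theta> \<tau> i)"
      using ends_nonneg[OF strat_sig0] by (intro sum_nonneg) auto
    then show ?thesis using ends_partial[of sig0 \<theta> t] by simp
  qed
  finally show ?thesis .
qed

lemma tau_shift: "tau \<theta> (N + t) = (\<Sum>i\<in>T. al sig0 \<theta> t i * sv \<theta> N i)"
proof -
  have "al sig0 \<theta> (N + t) = it \<theta> N (al sig0 \<theta> t)"
    unfolding alive_it it_add ..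
  then have "tau \<theta> (N + t) = (\<Sum>j\<in>T. \<Sum>i\<in>{1..m}. al sig0 \<theta> t i * K \<theta> N i j)"
    unfolding tau_def using it_lin T_sub by (auto intro!: sum.cong)
  also have "\<dots> = (\<Sum>i\<in>{1..m}. al sig0 \<theta> t i * sv \<theta> N i)"
    unfolding sv_def by (simp add: sum_distrib_left sum.swap[of _ T])
  also have "\<dots> = (\<Sum>i\<in>T. al sig0 \<theta> t i * sv \<theta> N i)"
    unfolding sum_split using sv_abs i0T i1T by simp
  finally show ?thesis .
qed

lemma decay: "\<exists>C r. 0 < C \<and> 0 < r \<and> r < 1 \<and> (\<forall>t. tau \<theta> t \<le> C * r ^ t)"
proof -
  obtain N c where N: "N \<ge> 1" and c: "0 < c" "c < 1" and svc: "\<forall>i\<in>T. sv \<theta> N i \<le> c"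
    using sv_unif by blast
  have step: "tau \<theta> (N + t) \<le> c * tau \<theta> t" for t
  proof -
    have "tau \<theta> (N + t) \<le> (\<Sum>i\<in>T. al sig0 \<theta> t i * c)"
      unfolding tau_shift using svc al0_nonnegT by (intro sum_mono mult_left_mono) auto
    also have "\<dots> = c * tau \<theta> t" unfolding tau_def by (simp add: sum_distrib_left mult.commute)
    finally show ?thesis .
  qed
  have bnd: "tau \<theta> t \<le> c ^ (t div N)" for t
  proof (induction t rule: less_induct)
    case (less t)
    show ?case
    proof (cases "t < N")
      case True then show ?thesis using tau_le1 by simp
    next
      case False
      then obtain t' where t': "t = N + t'" by (metis le_add_diff_inverse not_less)
      have "t' < t" using t' N by simp
      have dv: "t div N = Suc (t' div N)" using t' N by (simp add: div_add_self1)
      have "tau \<theta> t \<le> c * tau \<theta> t'" unfolding t' by (rule step)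
      also have "\<dots> \<le> c * c ^ (t' div N)" using less.IH[OF \<open>t' < t\<close>] c by simp
      also have "\<dots> = c ^ (t div N)" using dv by simp
      finally show ?thesis .
    qed
  qed
  define r where "r = root N c"
  have r0: "0 < r" unfolding r_def using N c by (simp add: real_root_gt_zero)
  have r1: "r < 1" unfolding r_def using N c by simp
  have rN: "r ^ N = c" unfolding r_def using N c by simp
  have geo: "c ^ (t div N) \<le> (1/c) * r ^ t" for t
  proof -
    have "t \<le> N * Suc (t div N)"
    proof -
      have e: "t div N * N + t mod N = t" by (rule div_mult_mod_eq)
      have "t mod N < N" using N by simp
      moreover have "N * Suc (t div N) = t div N * N + N" by simp
      ultimately show ?thesis using e by linarith
    qed
    then have "r ^ (N * Suc (t div N)) \<le> r ^ t" using r0 r1 by (intro power_decreasing) auto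
    moreover have "r ^ (N * Suc (t div N)) = c * c ^ (t div N)" by (simp only: power_mult rN power_Suc)
    ultimately have "c * c ^ (t div N) \<le> r ^ t" by simp
    then show ?thesis using c by (simp add: field_simps)
  qed
  have all: "\<forall>t. tau \<theta> t \<le> (1/c) * r ^ t"
  proof
    fix t show "tau \<theta> t \<le> (1/c) * r ^ t" using bnd[of t] geo[of t] by linarith
  qed
  show ?thesis using all c r0 r1 by (intro exI[of _ "1/c"] exI[of _ r]) auto
qed

lemma tau_summable: "summable (tau \<theta>)"
proof -
  obtain C r where Cr: "0 < C" "0 < r" "r < 1" "\<forall>t. tau \<theta> t \<le> C * r ^ t" using decay by blast
  show ?thesis
  proof (rule summable_comparison_test'[where g="\<lambda>t. C * r ^ t"])
    show "summable (\<lambda>t. C * r ^ t)" using Cr by (intro summable_mult summable_geometric) auto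
    show "norm (tau \<theta> t) \<le> C * r ^ t" for t using Cr tau_nonneg by simp
  qed
qed

lemma al_le_tau: "j \<in> T \<Longrightarrow> al sig0 \<theta> t j \<le> tau \<theta> t"
  unfolding tau_def using al0_nonnegT T_fin by (intro member_le_sum) auto

lemma summable_al: "j \<in> {1..m} \<Longrightarrow> summable (\<lambda>t. al sig0 \<theta> t j)"
proof -
  assume j: "j \<in> {1..m}"
  show ?thesis
  proof (cases "j \<in> T")
    case True
    show ?thesis
    proof (rule summable_comparison_test'[OF tau_summable])
      show "norm (al sig0 \<theta> t j) \<le> tau \<theta> t" for t using al_le_tau True al0_nonnegT by simp
    qed
  next
    case False
    then have "j = i0 \<or> j = i1" using j unfolding T_def by auto
    then show ?thesis using summable_i0 summable_i1[OF strat_sig0] by auto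
  qed
qed

lemma al_lim: "j \<in> {1..m} \<Longrightarrow> (\<lambda>t. al sig0 \<theta> t j) \<longlonglongrightarrow> 0"
  using summable_LIMSEQ_zero[OF summable_al] .

lemma harm:
  assumes h: "\<forall>i\<in>T. (\<Sum>j\<in>{1..m}. Q \<theta> i j * w j) = w i"
  shows "(\<Sum>t. al sig0 \<theta> t i1) * w i1 + (\<Sum>t. al sig0 \<theta> t i0) * w i0 = (\<Sum>j\<in>{1..m}. init P j * w j)"
proof -
  define W where "W t = (\<Sum>j\<in>{1..m}. al sig0 \<theta> t j * w j)" for t
  have WS: "W (Suc t) = W t - (al sig0 \<theta> t i1 * w i1 + al sig0 \<theta> t i0 * w i0)" for t
  proof -
    have "W (Suc t) = (\<Sum>j\<in>{1..m}. \<Sum>i\<in>T. al sig0 \<theta> t i * Q \<theta> i j * w j)"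
      unfolding W_def alive_Suc0 by (simp add: sum_distrib_right)
    also have "\<dots> = (\<Sum>i\<in>T. al sig0 \<theta> t i * (\<Sum>j\<in>{1..m}. Q \<theta> i j * w j))"
      by (subst sum.swap) (simp add: sum_distrib_left mult.assoc)
    also have "\<dots> = (\<Sum>i\<in>T. al sig0 \<theta> t i * w i)" using h by simp
    also have "\<dots> = W t - (al sig0 \<theta> t i1 * w i1 + al sig0 \<theta> t i0 * w i0)"
      unfolding W_def sum_split by simp
    finally show ?thesis .
  qed
  have part: "(\<Sum>\<tau><t. al sig0 \<theta> \<tau> i1 * w i1 + al sig0 \<theta> \<tau> i0 * w i0) = W 0 - W t" for t
    by (induction t) (auto simp: WS)
  have Wlim: "W \<longlonglongrightarrow> 0"
  proof -
    have "(\<lambda>t. \<Sum>j\<in>{1..m}. al sig0 \<theta> t j * w j) \<longlonglongrightarrow> (\<Sum>j\<in>{1..m}. 0 * w j)"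
      by (intro tendsto_sum tendsto_mult al_lim tendsto_const) auto
    then show ?thesis unfolding W_def by simp
  qed
  have "(\<lambda>t. al sig0 \<theta> t i1 * w i1 + al sig0 \<theta> t i0 * w i0) sums (W 0 - 0)"
    unfolding sums_def part by (intro tendsto_diff tendsto_const Wlim)
  then have "(\<Sum>t. al sig0 \<theta> t i1 * w i1 + al sig0 \<theta> t i0 * w i0) = W 0" by (simp add: sums_iff)
  moreover have "(\<Sum>t. al sig0 \<theta> t i1 * w i1 + al sig0 \<theta> t i0 * w i0) =
      (\<Sum>t. al sig0 \<theta> t i1) * w i1 + (\<Sum>t. al sig0 \<theta> t i0) * w i0"
    using summable_al[OF i1] summable_al[OF i0]
    by (subst suminf_add[symmetric]) (auto intro: summable_mult2 simp: suminf_mult2)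
  ultimately show ?thesis unfolding W_def alive_0 by simp
qed

lemma as_abs: "probH m sg P sig0 \<theta> + probL m sg P sig0 \<theta> = 1"
proof -
  have "(\<Sum>t. al sig0 \<theta> t i1) * 1 + (\<Sum>t. al sig0 \<theta> t i0) * 1 = (\<Sum>j\<in>{1..m}. init P j * 1)"
    by (rule harm[where w="\<lambda>_. 1"]) (use Q_sum T_sub in auto)
  then show ?thesis unfolding probH_eq probL_eq0 using init_sum by simp
qed

definition Nv where "Nv \<theta> j = (\<Sum>t. al sig0 \<theta> t j)"

lemma Nv_eq: "j \<in> {1..m} \<Longrightarrow> Nv \<theta> j = init P j + (\<Sum>i\<in>T. Nv \<theta> i * Q \<theta> i j)"
proof -
  assume j: "j \<in> {1..m}"
  have "(\<Sum>t. al sig0 \<theta> (Suc t) j) = Nv \<theta> j - init P j"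
    unfolding Nv_def using suminf_split_head[OF summable_al[OF j]] by (simp add: alive_0)
  moreover have "(\<Sum>t. al sig0 \<theta> (Suc t) j) = (\<Sum>i\<in>T. Nv \<theta> i * Q \<theta> i j)"
  proof -
    have "(\<Sum>t. al sig0 \<theta> (Suc t) j) = (\<Sum>t. \<Sum>i\<in>T. al sig0 \<theta> t i * Q \<theta> i j)"
      unfolding alive_Suc0 ..
    also have "\<dots> = (\<Sum>i\<in>T. \<Sum>t. al sig0 \<theta> t i * Q \<theta> i j)"
      by (rule suminf_sum) (use summable_al T_sub in \<open>auto intro: summable_mult2\<close>)
    also have "\<dots> = (\<Sum>i\<in>T. Nv \<theta> i * Q \<theta> i j)"
      unfolding Nv_def by (intro sum.cong refl suminf_mult2[symmetric] summable_al) (use T_sub in auto)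
    finally show ?thesis .
  qed
  ultimately show ?thesis by simp
qed

lemma Nv_nonneg: "j \<in> {1..m} \<Longrightarrow> 0 \<le> Nv \<theta> j"
  unfolding Nv_def using al0_nonneg summable_al by (intro suminf_nonneg) auto

lemma probH0_Nv: "probH m sg P sig0 \<theta> = Nv \<theta> i1"
  unfolding probH_eq Nv_def ..
lemma probL0_Nv: "probL m sg P sig0 \<theta> = Nv \<theta> i0"
  unfolding probL_eq0 Nv_def ..

end


lemma chain_bound:
  fixes A :: "'a set" and \<rho> :: "'a \<Rightarrow> real" and g :: real
  assumes fin: "finite A" and g1: "g \<ge> 1" and pos: "\<forall>x\<in>A. \<rho> x > 0"
    and cut: "\<And>S. S \<subseteq> A \<Longrightarrow> S \<noteq> {} \<Longrightarrow> S \<noteq> A \<Longrightarrow> \<exists>x\<in>S. \<exists>y\<in>A-S. \<rho> x \<le> g * \<rho> y"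
    and x: "x \<in> A" and y: "y \<in> A"
  shows "\<rho> x \<le> g ^ (card A - 1) * \<rho> y"
proof -
  have Ane: "A \<noteq> {}" using x by blast
  define M where "M = Max (\<rho> ` A)"
  have Mge: "\<rho> z \<le> M" if "z \<in> A" for z unfolding M_def using fin that by (intro Max_ge) auto
  have "M \<in> \<rho> ` A" unfolding M_def using fin Ane by (intro Max_in) auto
  then obtain z0 where z0: "z0 \<in> A" "\<rho> z0 = M" by auto
  define S where "S l = {z\<in>A. M \<le> g ^ l * \<rho> z}" for l
  have Ssub: "S l \<subseteq> A" for l unfolding S_def by auto
  have Smono: "S l \<subseteq> S (Suc l)" for l
  proof
    fix z assume "z \<in> S l"
    then have z: "z \<in> A" "M \<le> g ^ l * \<rho> z" unfolding S_def by auto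
    have "g ^ l * \<rho> z \<le> g ^ Suc l * \<rho> z"
      using g1 pos z(1) by (intro mult_right_mono) (auto simp: power_increasing less_imp_le)
    then show "z \<in> S (Suc l)" using z unfolding S_def by auto
  qed
  have cardS: "l < card A \<Longrightarrow> Suc l \<le> card (S l)" for l
  proof (induction l)
    case 0
    have "z0 \<in> S 0" unfolding S_def using z0 by simp
    then show ?case using finite_subset[OF Ssub fin] by (auto simp: Suc_le_eq card_gt_0_iff)
  next
    case (Suc l)
    have IH: "Suc l \<le> card (S l)" using Suc by simp
    show ?case
    proof (cases "S l = A")
      case True
      then have "S (Suc l) = A" using Smono[of l] Ssub[of "Suc l"] by blast
      then show ?thesis using Suc.prems by simp
    next
      case False
      have ne: "S l \<noteq> {}" using IH by auto
      obtain a b where a: "a \<in> S l" and b: "b \<in> A - S l" and ab: "\<rho> a \<le> g * \<rho> b"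
        using cut[OF Ssub ne False] by blast
      have "M \<le> g ^ l * \<rho> a" using a unfolding S_def by auto
      also have "\<dots> \<le> g ^ l * (g * \<rho> b)" using ab g1 by (intro mult_left_mono) auto
      also have "\<dots> = g ^ Suc l * \<rho> b" by simp
      finally have "b \<in> S (Suc l)" using b unfolding S_def by auto
      then have "insert b (S l) \<subseteq> S (Suc l)" using Smono by blast
      then have "card (insert b (S l)) \<le> card (S (Suc l))"
        by (rule card_mono[OF finite_subset[OF Ssub fin]])
      moreover have "card (insert b (S l)) = Suc (card (S l))"
        using b finite_subset[OF Ssub fin] by simp
      ultimately show ?thesis using IH by simp
    qed
  qed
  have "card A - 1 < card A" using fin Ane by (simp add: card_gt_0_iff)
  then have "card A \<le> card (S (card A - 1))" using cardS by fastforce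
  then have "S (card A - 1) = A" using Ssub fin by (meson card_seteq)
  then have "M \<le> g ^ (card A - 1) * \<rho> y" using y unfolding S_def by blast
  then show ?thesis using Mge[OF x] by linarith
qed

lemma le_G: "1 \<le> (G::real) \<Longrightarrow> 0 \<le> z \<Longrightarrow> z \<le> G * z"
  using mult_right_mono[of 1 G z] by simp

lemma mix_region:
  fixes G g0 g1 c xH xL bH bL :: real
  assumes G: "G \<ge> 1" and nn: "0 \<le> g0" "0 \<le> g1" "0 \<le> xH" "0 \<le> xL" "0 \<le> bH" "0 \<le> bL"
    and sH: "xH + bH = c" and sL: "xL + bL = c"
    and core: "xH * bL \<le> G * (xL * bH)"
  shows "(g1 + xH) * (g0 + bL) \<le> G * ((g1 + xL) * (g0 + bH))"
proof -
  have u: "bL * c \<le> G * bH * c"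
  proof -
    have "bL * c = bL * xH + bL * bH" unfolding sH[symmetric] by (simp add: algebra_simps)
    also have "\<dots> \<le> G * xL * bH + bL * bH" using core by (simp add: algebra_simps)
    also have "\<dots> \<le> G * xL * bH + G * bL * bH" using le_G[OF G, of "bL * bH"] nn by (simp add: mult.assoc)
    also have "\<dots> = G * bH * c" unfolding sL[symmetric] by (simp add: algebra_simps)
    finally show ?thesis .
  qed
  have v: "xH * c \<le> G * xL * c"
  proof -
    have "xH * c = xH * xL + xH * bL" unfolding sL[symmetric] by (simp add: algebra_simps)
    also have "\<dots> \<le> xH * xL + G * xL * bH" using core by (simp add: algebra_simps)
    also have "\<dots> \<le> G * xH * xL + G * xL * bH" using le_G[OF G, of "xH * xL"] nn by (simp add: mult.assoc)
    also have "\<dots> = G * xL * c" unfolding sH[symmetric] by (simp add: algebra_simps)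
    finally show ?thesis .
  qed
  show ?thesis
  proof (cases "c = 0")
    case True
    then have "xH = 0" "bL = 0" "xL = 0" "bH = 0" using sH sL nn by auto
    then show ?thesis using le_G[OF G, of "g1 * g0"] nn by simp
  next
    case False
    then have c: "c > 0" using sH nn by linarith
    have u': "bL \<le> G * bH" using u c by simp
    have v': "xH \<le> G * xL" using v c by simp
    have "(g1 + xH) * (g0 + bL) = g1 * g0 + g1 * bL + xH * g0 + xH * bL" by (simp add: algebra_simps)
    also have "\<dots> \<le> G * (g1 * g0) + G * (g1 * bH) + G * (xL * g0) + G * (xL * bH)"
    proof -
      have "g1 * g0 \<le> G * (g1 * g0)" using le_G[OF G, of "g1 * g0"] nn by simp
      moreover have "g1 * bL \<le> G * (g1 * bH)" using u' nn by (metis mult.left_commute mult_left_mono)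
      moreover have "xH * g0 \<le> G * (xL * g0)" using v' nn by (metis mult.assoc mult_right_mono)
      ultimately show ?thesis using core by linarith
    qed
    also have "\<dots> = G * ((g1 + xL) * (g0 + bH))" by (simp add: algebra_simps)
    finally show ?thesis .
  qed
qed


lemma sum_pos_iff_ex:
  fixes f :: "'a \<Rightarrow> real"
  assumes fin: "finite A" and nn: "\<And>x. x \<in> A \<Longrightarrow> 0 \<le> f x"
  shows "(\<Sum>x\<in>A. f x) > 0 \<longleftrightarrow> (\<exists>x\<in>A. f x > 0)"
proof
  assume "(\<Sum>x\<in>A. f x) > 0"
  then have "\<not> (\<forall>x\<in>A. f x = 0)"
  proof (intro notI)
    assume "\<forall>x\<in>A. f x = 0"
    then have "(\<Sum>x\<in>A. f x) = 0" by simp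
    moreover assume "(\<Sum>x\<in>A. f x) > 0"
    ultimately show False by simp
  qed
  then obtain x where x: "x \<in> A" "f x \<noteq> 0" by blast
  have "0 \<le> f x" using nn x(1) .
  then have "f x > 0" using x(2) by simp
  then show "\<exists>x\<in>A. f x > 0" using x(1) by blast
next
  assume "\<exists>x\<in>A. f x > 0"
  then obtain x where x: "x \<in> A" "f x > 0" by blast
  have "f x \<le> (\<Sum>x\<in>A. f x)" by (rule member_le_sum[OF x(1) _ fin]) (use nn in auto)
  then show "(\<Sum>x\<in>A. f x) > 0" using x by simp
qed

context gm
begin

definition lmax where "lmax = Max (range (\<lambda>s. sg True s / sg False s))"
definition lmin where "lmin = Min (range (\<lambda>s. sg True s / sg False s))"

lemma gamma_eq: "gamma sg = lmax / lmin" unfolding gamma_def lmax_def lmin_def ..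

lemma lmin_pos: "lmin > 0"
proof -
  have "lmin \<in> range (\<lambda>s. sg True s / sg False s)" unfolding lmin_def by (intro Min_in) auto
  then show ?thesis using pos by auto
qed

lemma ratio_le: "sg True s \<le> lmax * sg False s"
proof -
  have "sg True s / sg False s \<le> lmax" unfolding lmax_def by (intro Max_ge) auto
  then show ?thesis using pos[of False s] by (simp add: divide_le_eq)
qed

lemma ratio_ge: "lmin * sg False s \<le> sg True s"
proof -
  have "lmin \<le> sg True s / sg False s" unfolding lmin_def by (intro Min_le) auto
  then show ?thesis using pos[of False s] by (simp add: le_divide_eq)
qed

lemma lmin_le_lmax: "lmin \<le> lmax"
proof -
  fix s :: 's
  have "lmin * sg False s \<le> sg True s" "sg True s \<le> lmax * sg False s" using ratio_le ratio_ge by auto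
  then have "lmin * sg False s \<le> lmax * sg False s" by linarith
  then show ?thesis using pos[of False s] by simp
qed

lemma gamma_ge1: "gamma sg \<ge> 1"
  unfolding gamma_eq using lmin_pos lmin_le_lmax by simp

lemma lmax_eq: "lmax = gamma sg * lmin" unfolding gamma_eq using lmin_pos by simp

lemma Q_le: "i \<in> {1..m} \<Longrightarrow> j \<in> {1..m} \<Longrightarrow> Q True i j \<le> lmax * Q False i j"
proof -
  assume i: "i \<in> {1..m}" and j: "j \<in> {1..m}"
  have "sg True s * trans P i s j \<le> lmax * (sg False s * trans P i s j)" for s
    using mult_right_mono[OF ratio_le[of s] trans_nonneg[OF i j, of s]] by (simp add: mult.assoc)
  then show ?thesis unfolding Q_def sum_distrib_left by (intro sum_mono)
qed

lemma Q_ge: "i \<in> {1..m} \<Longrightarrow> j \<in> {1..m} \<Longrightarrow> lmin * Q False i j \<le> Q True i j"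
proof -
  assume i: "i \<in> {1..m}" and j: "j \<in> {1..m}"
  have "lmin * (sg False s * trans P i s j) \<le> sg True s * trans P i s j" for s
    using mult_right_mono[OF ratio_ge[of s] trans_nonneg[OF i j, of s]] by (simp add: mult.assoc)
  then show ?thesis unfolding Q_def sum_distrib_left by (intro sum_mono)
qed

lemma Q_pos_TF: "i \<in> {1..m} \<Longrightarrow> j \<in> {1..m} \<Longrightarrow> Q True i j > 0 \<longleftrightarrow> Q False i j > 0"
proof -
  assume i: "i \<in> {1..m}" and j: "j \<in> {1..m}"
  show ?thesis using Q_pos_iff[OF i j, of True] Q_pos_iff[OF i j, of False] by simp
qed

end

context pm
begin

lemma al_pos_TF: "j \<in> {1..m} \<Longrightarrow> al sig0 True t j > 0 \<longleftrightarrow> al sig0 False t j > 0"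
proof (induction t arbitrary: j)
  case 0 then show ?case by (simp add: alive_0)
next
  case (Suc t)
  have eq: "al sig0 \<theta> (Suc t) j > 0 \<longleftrightarrow> (\<exists>i\<in>T. al sig0 \<theta> t i * Q \<theta> i j > 0)" for \<theta>
    unfolding alive_Suc0 using Suc.prems al0_nonnegT Q_nonneg T_sub
    by (intro sum_pos_iff_ex T_fin) (auto intro!: mult_nonneg_nonneg)
  have pw: "al sig0 \<theta> t i * Q \<theta> i j > 0 \<longleftrightarrow> al sig0 \<theta> t i > 0 \<and> Q \<theta> i j > 0" if "i \<in> T" for i \<theta>
  proof -
    have a: "0 \<le> al sig0 \<theta> t i" using al0_nonnegT[OF that] .
    have q: "0 \<le> Q \<theta> i j" using Q_nonneg[of i j \<theta>] that Suc.prems T_sub by auto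
    show ?thesis using a q by (auto simp: zero_less_mult_iff)
  qed
  have pw2: "(al sig0 True t i > 0 \<and> Q True i j > 0) \<longleftrightarrow> (al sig0 False t i > 0 \<and> Q False i j > 0)"
    if i: "i \<in> T" for i
  proof -
    have ir: "i \<in> {1..m}" using i T_sub by auto
    show ?thesis using Suc.IH[OF ir] Q_pos_TF[OF ir Suc.prems] by simp
  qed
  have "(\<exists>i\<in>T. al sig0 True t i * Q True i j > 0) \<longleftrightarrow> (\<exists>i\<in>T. al sig0 False t i * Q False i j > 0)"
  proof
    assume "\<exists>i\<in>T. al sig0 True t i * Q True i j > 0"
    then obtain i where "i \<in> T" "al sig0 True t i * Q True i j > 0" by blast
    then show "\<exists>i\<in>T. al sig0 False t i * Q False i j > 0" using pw pw2 by blast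
  next
    assume "\<exists>i\<in>T. al sig0 False t i * Q False i j > 0"
    then obtain i where "i \<in> T" "al sig0 False t i * Q False i j > 0" by blast
    then show "\<exists>i\<in>T. al sig0 True t i * Q True i j > 0" using pw pw2 by blast
  qed
  then show ?case using eq by blast
qed

lemma Nv_pos_TF: "j \<in> {1..m} \<Longrightarrow> Nv True j > 0 \<longleftrightarrow> Nv False j > 0"
proof -
  assume j: "j \<in> {1..m}"
  have "Nv \<theta> j > 0 \<longleftrightarrow> (\<exists>t. al sig0 \<theta> t j > 0)" for \<theta>
    unfolding Nv_def using suminf_pos_iff[OF summable_al[OF j]] al0_nonneg[OF j] by blast
  then show ?thesis using al_pos_TF[OF j] by blast
qed

definition A where "A = {j\<in>T. Nv False j > 0}"
definition c0 where "c0 = (\<Sum>j\<in>T. init P j)"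
definition Qa where "Qa \<theta> i = Q \<theta> i i0 + Q \<theta> i i1"

lemma A_sub: "A \<subseteq> T" unfolding A_def by auto
lemma A_fin: "finite A" using A_sub T_fin finite_subset by blast
lemma A_range: "j \<in> A \<Longrightarrow> j \<in> {1..m}" using A_sub T_sub by auto

lemma NA_pos: "j \<in> A \<Longrightarrow> Nv \<theta> j > 0"
  using Nv_pos_TF A_range unfolding A_def by (cases \<theta>) auto

lemma N_out: "j \<in> T \<Longrightarrow> j \<notin> A \<Longrightarrow> Nv \<theta> j = 0"
proof -
  assume j: "j \<in> T" "j \<notin> A"
  then have jr: "j \<in> {1..m}" using T_sub by auto
  have "\<not> Nv False j > 0" using j unfolding A_def by auto
  then have "\<not> Nv \<theta> j > 0" using Nv_pos_TF[OF jr] by (cases \<theta>) auto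
  then show ?thesis using Nv_nonneg[OF jr, of \<theta>] by simp
qed

lemma sumTA: "(\<Sum>i\<in>T. Nv \<theta> i * f i) = (\<Sum>i\<in>A. Nv \<theta> i * f i)"
  by (rule sum.mono_neutral_right[OF T_fin A_sub]) (use N_out in auto)

lemma Qa_nonneg: "i \<in> {1..m} \<Longrightarrow> 0 \<le> Qa \<theta> i"
  unfolding Qa_def using Q_nonneg i0 i1 by (simp add: add_nonneg_nonneg)

lemma Nv_eqA: "j \<in> {1..m} \<Longrightarrow> Nv \<theta> j = init P j + (\<Sum>i\<in>A. Nv \<theta> i * Q \<theta> i j)"
  using Nv_eq sumTA by simp

lemma init_A: "j \<in> T \<Longrightarrow> init P j > 0 \<Longrightarrow> j \<in> A"
proof -
  assume j: "j \<in> T" "init P j > 0"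
  have jr: "j \<in> {1..m}" using j T_sub by auto
  have "0 \<le> (\<Sum>i\<in>A. Nv False i * Q False i j)"
    using Nv_nonneg Q_nonneg A_range jr by (intro sum_nonneg mult_nonneg_nonneg) auto
  then have "Nv False j > 0" using Nv_eqA[OF jr, of False] j by simp
  then show ?thesis using j unfolding A_def by auto
qed

lemma init_out: "j \<in> T \<Longrightarrow> j \<notin> A \<Longrightarrow> init P j = 0"
  using init_A init_nonneg T_sub by (meson antisym not_le subsetD)

lemma Q_A: "i \<in> A \<Longrightarrow> j \<in> T \<Longrightarrow> Q \<theta> i j > 0 \<Longrightarrow> j \<in> A"
proof -
  assume i: "i \<in> A" and j: "j \<in> T" and q: "Q \<theta> i j > 0"
  have jr: "j \<in> {1..m}" using j T_sub by auto
  have ir: "i \<in> {1..m}" using i A_range by auto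
  have qF: "Q False i j > 0" using q Q_pos_TF[OF ir jr] by (cases \<theta>) auto
  have "Nv False i * Q False i j \<le> (\<Sum>i\<in>A. Nv False i * Q False i j)"
    using member_le_sum[of i A "\<lambda>i. Nv False i * Q False i j"] i A_fin Nv_nonneg Q_nonneg A_range jr
    by (auto intro: mult_nonneg_nonneg)
  moreover have "0 < Nv False i * Q False i j" using NA_pos[OF i] qF by simp
  moreover have "0 \<le> init P j" using init_nonneg jr by simp
  ultimately have "Nv False j > 0" using Nv_eqA[OF jr, of False] by simp
  then show ?thesis using j unfolding A_def by auto
qed

lemma Q_out: "i \<in> A \<Longrightarrow> j \<in> T \<Longrightarrow> j \<notin> A \<Longrightarrow> Q \<theta> i j = 0"
  using Q_A Q_nonneg A_range T_sub by (meson antisym not_le subsetD)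

lemma c0_A: "(\<Sum>j\<in>A. init P j) = c0"
  unfolding c0_def by (rule sum.mono_neutral_left[OF T_fin A_sub]) (use init_out in auto)

lemma flowabs: "(\<Sum>i\<in>A. Nv \<theta> i * Qa \<theta> i) = c0"
proof -
  have h: "Nv \<theta> i1 + Nv \<theta> i0 = 1" using as_abs[of \<theta>] unfolding probH0_Nv probL0_Nv .
  have "(\<Sum>j\<in>{1..m}. init P j) = init P i0 + init P i1 + c0" unfolding sum_split c0_def ..
  then have "init P i0 + init P i1 + c0 = 1" using init_sum by simp
  moreover have "Nv \<theta> i1 = init P i1 + (\<Sum>i\<in>A. Nv \<theta> i * Q \<theta> i i1)" using Nv_eqA[OF i1] .
  moreover have "Nv \<theta> i0 = init P i0 + (\<Sum>i\<in>A. Nv \<theta> i * Q \<theta> i i0)" using Nv_eqA[OF i0] .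
  moreover have "(\<Sum>i\<in>A. Nv \<theta> i * Qa \<theta> i) = (\<Sum>i\<in>A. Nv \<theta> i * Q \<theta> i i0) + (\<Sum>i\<in>A. Nv \<theta> i * Q \<theta> i i1)"
    unfolding Qa_def by (simp add: distrib_left sum.distrib)
  ultimately show ?thesis using h by linarith
qed

lemma rowA: "i \<in> A \<Longrightarrow> (\<Sum>j\<in>A. Q \<theta> i j) = 1 - Qa \<theta> i"
proof -
  assume i: "i \<in> A"
  have ir: "i \<in> {1..m}" using i A_range by auto
  have "(\<Sum>j\<in>A. Q \<theta> i j) = (\<Sum>j\<in>T. Q \<theta> i j)"
    by (rule sum.mono_neutral_left[OF T_fin A_sub]) (use Q_out i in auto)
  then show ?thesis using QT_sum[OF ir] unfolding Qa_def by simp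
qed

lemma c0_pos: "A \<noteq> {} \<Longrightarrow> c0 > 0"
proof (rule ccontr)
  assume ne: "A \<noteq> {}" and nc: "\<not> c0 > 0"
  have c0z: "c0 = 0" using nc c0_A init_nonneg A_range by (metis sum_nonneg antisym not_le)
  have z: "\<forall>i\<in>A. Nv False i * Qa False i = 0"
    using flowabs[of False] c0z sum_nonneg_eq_0_iff[OF A_fin, of "\<lambda>i. Nv False i * Qa False i"]
      Nv_nonneg Qa_nonneg A_range by (auto intro: mult_nonneg_nonneg)
  have qa0: "Qa False i = 0" if "i \<in> A" for i using bspec[OF z that] NA_pos[OF that, of False] by simp
  have cl: "\<forall>x\<in>A. \<forall>j. edge m P x j \<longrightarrow> j \<in> A"
  proof (intro ballI allI impI)
    fix x j assume x: "x \<in> A" and e: "edge m P x j"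
    have xr: "x \<in> {1..m}" and jr: "j \<in> {1..m}" and q: "Q False x j > 0" using e edge_iff by auto
    have "Q False x i0 = 0" "Q False x i1 = 0"
      using qa0[OF x] Q_nonneg[OF xr i0, of False] Q_nonneg[OF xr i1, of False] unfolding Qa_def by auto
    then have "j \<in> T" using q jr unfolding T_def by auto
    then show "j \<in> A" using Q_A[OF x _ q] by simp
  qed
  show False using no_closed[OF A_sub ne cl] .
qed

definition P' where "P' \<theta> i j = Q \<theta> i j + Qa \<theta> i * init P j / c0"

lemma P'_nonneg: "i \<in> A \<Longrightarrow> j \<in> A \<Longrightarrow> c0 > 0 \<Longrightarrow> 0 \<le> P' \<theta> i j"
  unfolding P'_def using Q_nonneg Qa_nonneg init_nonneg A_range
  by (auto intro!: add_nonneg_nonneg divide_nonneg_pos mult_nonneg_nonneg)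

lemma P'_le: "i \<in> A \<Longrightarrow> j \<in> A \<Longrightarrow> c0 > 0 \<Longrightarrow> P' True i j \<le> lmax * P' False i j"
proof -
  assume i: "i \<in> A" and j: "j \<in> A" and c: "c0 > 0"
  have ir: "i \<in> {1..m}" and jr: "j \<in> {1..m}" using i j A_range by auto
  have "Qa True i \<le> lmax * Qa False i" unfolding Qa_def using Q_le[OF ir i0] Q_le[OF ir i1] by (simp add: distrib_left)
  then have "Qa True i * (init P j / c0) \<le> lmax * Qa False i * (init P j / c0)"
    using init_nonneg[OF jr] c by (intro mult_right_mono) auto
  then show ?thesis unfolding P'_def using Q_le[OF ir jr] by (simp add: distrib_left mult.assoc)
qed

lemma P'_ge: "i \<in> A \<Longrightarrow> j \<in> A \<Longrightarrow> c0 > 0 \<Longrightarrow> lmin * P' False i j \<le> P' True i j"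
proof -
  assume i: "i \<in> A" and j: "j \<in> A" and c: "c0 > 0"
  have ir: "i \<in> {1..m}" and jr: "j \<in> {1..m}" using i j A_range by auto
  have "lmin * Qa False i \<le> Qa True i" unfolding Qa_def using Q_ge[OF ir i0] Q_ge[OF ir i1] by (simp add: distrib_left)
  then have "lmin * Qa False i * (init P j / c0) \<le> Qa True i * (init P j / c0)"
    using init_nonneg[OF jr] c by (intro mult_right_mono) auto
  then show ?thesis unfolding P'_def using Q_ge[OF ir jr] by (simp add: distrib_left mult.assoc)
qed

lemma NP': "c0 > 0 \<Longrightarrow> j \<in> A \<Longrightarrow> Nv \<theta> j = (\<Sum>i\<in>A. Nv \<theta> i * P' \<theta> i j)"
proof -
  assume c: "c0 > 0" and j: "j \<in> A"
  have "(\<Sum>i\<in>A. Nv \<theta> i * P' \<theta> i j) = (\<Sum>i\<in>A. Nv \<theta> i * Q \<theta> i j + (Nv \<theta> i * Qa \<theta> i) * (init P j / c0))"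
    unfolding P'_def by (simp add: distrib_left mult.assoc)
  also have "\<dots> = (\<Sum>i\<in>A. Nv \<theta> i * Q \<theta> i j) + (\<Sum>i\<in>A. Nv \<theta> i * Qa \<theta> i) * (init P j / c0)"
    by (simp add: sum.distrib sum_distrib_right sum_divide_distrib)
  also have "\<dots> = (\<Sum>i\<in>A. Nv \<theta> i * Q \<theta> i j) + init P j"
    unfolding flowabs using c by simp
  finally show ?thesis using Nv_eqA[OF A_range[OF j]] by simp
qed

lemma rowP': "c0 > 0 \<Longrightarrow> i \<in> A \<Longrightarrow> (\<Sum>j\<in>A. P' \<theta> i j) = 1"
proof -
  assume c: "c0 > 0" and i: "i \<in> A"
  have "(\<Sum>j\<in>A. P' \<theta> i j) = (\<Sum>j\<in>A. Q \<theta> i j) + Qa \<theta> i * (\<Sum>j\<in>A. init P j) / c0"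
    unfolding P'_def by (simp add: sum.distrib sum_distrib_left sum_divide_distrib)
  also have "\<dots> = 1" unfolding rowA[OF i] c0_A using c by simp
  finally show ?thesis .
qed

definition flow where "flow \<theta> X Y = (\<Sum>x\<in>X. Nv \<theta> x * (\<Sum>j\<in>Y. P' \<theta> x j))"

lemma balance: assumes c: "c0 > 0" and S: "S \<subseteq> A"
  shows "flow \<theta> S (A - S) = flow \<theta> (A - S) S"
proof -
  have finS: "finite S" using S A_fin finite_subset by blast
  have AS: "A = S \<union> (A - S)" using S by auto
  have "(\<Sum>j\<in>S. Nv \<theta> j) = (\<Sum>j\<in>S. \<Sum>i\<in>A. Nv \<theta> i * P' \<theta> i j)"
    using NP'[OF c] S by (intro sum.cong) auto
  also have "\<dots> = (\<Sum>i\<in>A. Nv \<theta> i * (\<Sum>j\<in>S. P' \<theta> i j))"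
    by (subst sum.swap) (simp add: sum_distrib_left)
  also have "\<dots> = (\<Sum>i\<in>S. Nv \<theta> i * (\<Sum>j\<in>S. P' \<theta> i j)) + flow \<theta> (A - S) S"
    unfolding flow_def by (subst AS) (rule sum.union_disjoint, use finS A_fin in auto)
  also have "(\<Sum>i\<in>S. Nv \<theta> i * (\<Sum>j\<in>S. P' \<theta> i j)) = (\<Sum>i\<in>S. Nv \<theta> i) - flow \<theta> S (A - S)"
  proof -
    have "(\<Sum>j\<in>S. P' \<theta> i j) = 1 - (\<Sum>j\<in>A - S. P' \<theta> i j)" if "i \<in> S" for i
    proof -
      have "(\<Sum>j\<in>A. P' \<theta> i j) = (\<Sum>j\<in>S. P' \<theta> i j) + (\<Sum>j\<in>A - S. P' \<theta> i j)"
        by (subst AS) (rule sum.union_disjoint, use finS A_fin in auto)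
      then show ?thesis using rowP'[OF c, of i \<theta>] that S by auto
    qed
    then have "(\<Sum>i\<in>S. Nv \<theta> i * (\<Sum>j\<in>S. P' \<theta> i j)) = (\<Sum>i\<in>S. Nv \<theta> i - Nv \<theta> i * (\<Sum>j\<in>A - S. P' \<theta> i j))"
      by (intro sum.cong refl) (simp add: right_diff_distrib)
    then show ?thesis unfolding flow_def by (simp add: sum_subtractf)
  qed
  finally show ?thesis by simp
qed

lemma flow_nonneg: "c0 > 0 \<Longrightarrow> X \<subseteq> A \<Longrightarrow> Y \<subseteq> A \<Longrightarrow> 0 \<le> flow \<theta> X Y"
  unfolding flow_def
proof (intro sum_nonneg mult_nonneg_nonneg)
  fix x j assume c: "c0 > 0" and X: "X \<subseteq> A" and Y: "Y \<subseteq> A" and x: "x \<in> X" and j: "j \<in> Y"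
  show "0 \<le> P' \<theta> x j" using P'_nonneg[OF _ _ c] X Y x j by blast
next
  fix x assume "X \<subseteq> A" "x \<in> X"
  then show "0 \<le> Nv \<theta> x" using Nv_nonneg A_range by blast
qed

lemma posflow:
  assumes c: "c0 > 0" and X: "X \<subseteq> A" "X \<noteq> {}" and iY: "(\<Sum>j\<in>A - X. init P j) > 0"
  shows "flow False X (A - X) > 0"
proof (rule ccontr)
  assume "\<not> flow False X (A - X) > 0"
  then have f0: "flow False X (A - X) = 0" using flow_nonneg[OF c X(1), of "A - X" False] by auto
  have finX: "finite X" using X A_fin finite_subset by blast
  have nnx: "\<And>x. x \<in> X \<Longrightarrow> 0 \<le> Nv False x * (\<Sum>j\<in>A - X. P' False x j)"
    using Nv_nonneg A_range P'_nonneg[OF _ _ c] X(1) by (auto intro!: mult_nonneg_nonneg sum_nonneg)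
  have "\<forall>x\<in>X. Nv False x * (\<Sum>j\<in>A - X. P' False x j) = 0"
    using f0 sum_nonneg_eq_0_iff[of X "\<lambda>x. Nv False x * (\<Sum>j\<in>A - X. P' False x j)"] finX nnx
    unfolding flow_def by blast
  then have z1: "\<And>x. x \<in> X \<Longrightarrow> Nv False x * (\<Sum>j\<in>A - X. P' False x j) = 0" by blast
  have z2: "\<And>x j. x \<in> X \<Longrightarrow> j \<in> A - X \<Longrightarrow> P' False x j = 0"
  proof -
    fix x j assume x: "x \<in> X" and j: "j \<in> A - X"
    have "(\<Sum>j\<in>A - X. P' False x j) = 0" using z1[OF x] NA_pos[of x False] x X(1) by auto
    then show "P' False x j = 0"
      using sum_nonneg_eq_0_iff[of "A - X" "P' False x"] A_fin P'_nonneg[OF _ _ c] x X(1) j by auto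
  qed
  obtain j0 where j0: "j0 \<in> A - X" "init P j0 > 0"
    using iY sum_pos_iff_ex[of "A - X" "init P"] A_fin init_nonneg A_range by auto
  have j0r: "j0 \<in> {1..m}" using j0 A_range by auto
  have qa0: "Qa False x = 0" if x: "x \<in> X" for x
  proof -
    have xr: "x \<in> {1..m}" using x X(1) A_range by auto
    have "Q False x j0 + Qa False x * init P j0 / c0 = 0" using z2[OF x j0(1)] unfolding P'_def .
    moreover have "0 \<le> Q False x j0" using Q_nonneg[OF xr j0r] .
    moreover have "0 \<le> Qa False x * init P j0 / c0" using Qa_nonneg[OF xr] j0 c by simp
    ultimately have "Qa False x * init P j0 / c0 = 0" by linarith
    then show ?thesis using j0 c by simp
  qed
  have cl: "\<forall>x\<in>X. \<forall>j. edge m P x j \<longrightarrow> j \<in> X"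
  proof (intro ballI allI impI)
    fix x j assume x: "x \<in> X" and e: "edge m P x j"
    have xA: "x \<in> A" using x X(1) by auto
    have xr: "x \<in> {1..m}" and jr: "j \<in> {1..m}" and q: "Q False x j > 0" using e edge_iff by auto
    have "Q False x i0 = 0" "Q False x i1 = 0"
      using qa0[OF x] Q_nonneg[OF xr i0, of False] Q_nonneg[OF xr i1, of False] unfolding Qa_def by auto
    then have jT: "j \<in> T" using q jr unfolding T_def by auto
    then have jA: "j \<in> A" using Q_A[OF xA _ q] by simp
    show "j \<in> X"
    proof (rule ccontr)
      assume "j \<notin> X"
      then have "P' False x j = 0" using z2[OF x] jA by auto
      moreover have "0 \<le> Qa False x * init P j / c0" using Qa_nonneg[OF xr] init_nonneg[OF jr] c by simp
      ultimately show False using q unfolding P'_def by linarith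
    qed
  qed
  show False using no_closed[of X] X A_sub cl by blast
qed

definition rho where "rho j = Nv True j / Nv False j"

lemma rho_pos: "j \<in> A \<Longrightarrow> rho j > 0" unfolding rho_def using NA_pos by simp
lemma NT_rho: "j \<in> A \<Longrightarrow> Nv True j = rho j * Nv False j" unfolding rho_def using NA_pos[of j False] by simp

lemma cut:
  assumes S: "S \<subseteq> A" "S \<noteq> {}" "S \<noteq> A"
  shows "\<exists>x\<in>S. \<exists>y\<in>A-S. rho x \<le> gamma sg * rho y"
proof (rule ccontr)
  assume H: "\<not> ?thesis"
  have Ane: "A \<noteq> {}" using S by auto
  have c: "c0 > 0" using c0_pos[OF Ane] .
  have finS: "finite S" using S A_fin finite_subset by blast
  have finD: "finite (A - S)" using A_fin by simp
  have Dne: "A - S \<noteq> {}" using S by auto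
  have AS: "A - (A - S) = S" using S by auto
  have FL: "flow False (A - S) S > 0"
  proof (cases "(\<Sum>j\<in>S. init P j) > 0")
    case True
    then show ?thesis using posflow[OF c _ Dne] AS by auto
  next
    case False
    have "(\<Sum>j\<in>A. init P j) = (\<Sum>j\<in>S. init P j) + (\<Sum>j\<in>A - S. init P j)"
      using S(1) finS A_fin by (metis sum.subset_diff add.commute)
    moreover have "(\<Sum>j\<in>S. init P j) \<ge> 0" using init_nonneg A_range S(1) by (auto intro: sum_nonneg)
    ultimately have "(\<Sum>j\<in>A - S. init P j) > 0" using False c0_A c by linarith
    then have "flow False S (A - S) > 0" using posflow[OF c S(1) S(2)] by simp
    then show ?thesis using balance[OF c S(1)] by simp
  qed
  define r where "r = Min (rho ` S)"
  define M where "M = Max (rho ` (A - S))"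
  have "r \<in> rho ` S" unfolding r_def using finS S by (intro Min_in) auto
  then obtain x0 where x0: "x0 \<in> S" "rho x0 = r" by auto
  have "M \<in> rho ` (A - S)" unfolding M_def using finD Dne by (intro Max_in) auto
  then obtain y0 where y0: "y0 \<in> A - S" "rho y0 = M" by auto
  have rle: "r \<le> rho x" if "x \<in> S" for x unfolding r_def using finS that by (intro Min_le) auto
  have Mge: "rho y \<le> M" if "y \<in> A - S" for y unfolding M_def using finD that by (intro Max_ge) auto
  have "\<not> rho x0 \<le> gamma sg * rho y0" using H x0(1) y0(1) by blast
  then have lt: "gamma sg * M < r" using x0 y0 by simp
  have r0: "0 \<le> r" using rho_pos x0 S by force
  have M0: "0 \<le> M" using rho_pos y0 by force
  have lo: "lmin * r * flow False S (A - S) \<le> flow True S (A - S)"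
  proof -
    have "lmin * r * flow False S (A - S) = (\<Sum>x\<in>S. (r * Nv False x) * (lmin * (\<Sum>j\<in>A - S. P' False x j)))"
      unfolding flow_def by (simp add: sum_distrib_left algebra_simps)
    also have "\<dots> \<le> (\<Sum>x\<in>S. Nv True x * (\<Sum>j\<in>A - S. P' True x j))"
    proof (rule sum_mono)
      fix x assume x: "x \<in> S"
      have xA: "x \<in> A" using x S by auto
      have "r * Nv False x \<le> Nv True x" unfolding NT_rho[OF xA]
        using rle[OF x] Nv_nonneg A_range[OF xA] by (intro mult_right_mono) auto
      moreover have "lmin * (\<Sum>j\<in>A - S. P' False x j) \<le> (\<Sum>j\<in>A - S. P' True x j)"
        unfolding sum_distrib_left using P'_ge[OF xA _ c] by (intro sum_mono) auto
      moreover have "0 \<le> r * Nv False x" using r0 Nv_nonneg A_range[OF xA] by simp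
      moreover have "0 \<le> lmin * (\<Sum>j\<in>A - S. P' False x j)"
        using lmin_pos P'_nonneg[OF xA _ c] by (intro mult_nonneg_nonneg sum_nonneg) auto
      ultimately show "(r * Nv False x) * (lmin * (\<Sum>j\<in>A - S. P' False x j)) \<le> Nv True x * (\<Sum>j\<in>A - S. P' True x j)"
        by (intro mult_mono) auto
    qed
    finally show ?thesis unfolding flow_def .
  qed
  have hi: "flow True (A - S) S \<le> lmax * M * flow False (A - S) S"
  proof -
    have "flow True (A - S) S \<le> (\<Sum>y\<in>A - S. (M * Nv False y) * (lmax * (\<Sum>j\<in>S. P' False y j)))"
      unfolding flow_def
    proof (rule sum_mono)
      fix y assume y: "y \<in> A - S"
      have yA: "y \<in> A" using y by auto
      have "Nv True y \<le> M * Nv False y" unfolding NT_rho[OF yA]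
        using Mge[OF y] Nv_nonneg A_range[OF yA] by (intro mult_right_mono) auto
      moreover have "(\<Sum>j\<in>S. P' True y j) \<le> lmax * (\<Sum>j\<in>S. P' False y j)"
        unfolding sum_distrib_left using P'_le[OF yA _ c] S by (intro sum_mono) auto
      moreover have "0 \<le> Nv True y" using Nv_nonneg A_range[OF yA] by simp
      moreover have "0 \<le> (\<Sum>j\<in>S. P' True y j)"
        using P'_nonneg[OF yA _ c] S by (intro sum_nonneg) auto
      ultimately show "Nv True y * (\<Sum>j\<in>S. P' True y j) \<le> (M * Nv False y) * (lmax * (\<Sum>j\<in>S. P' False y j))"
        by (intro mult_mono) (auto simp: M0 Nv_nonneg A_range[OF yA])
    qed
    also have "\<dots> = lmax * M * flow False (A - S) S"
      unfolding flow_def by (simp add: sum_distrib_left algebra_simps)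
    finally show ?thesis .
  qed
  have "lmin * r * flow False (A - S) S \<le> lmax * M * flow False (A - S) S"
    using lo hi balance[OF c S(1), of True] balance[OF c S(1), of False] by simp
  then have "lmin * r \<le> lmax * M" using FL by simp
  then have "lmin * r \<le> lmin * (gamma sg * M)" unfolding lmax_eq by (simp add: algebra_simps)
  then have "r \<le> gamma sg * M" using lmin_pos by simp
  then show False using lt by simp
qed

lemma card_T: "card T = m - 2"
proof -
  have sub: "{i0, i1} \<subseteq> {1..m}" using i0 i1 by auto
  have "card T = card {1..m} - card {i0, i1}" unfolding T_def
    by (rule card_Diff_subset[OF _ sub]) simp
  then show ?thesis using i01 by simp
qed

theorem HC: "probH m sg P sig0 True * (1 - probH m sg P sig0 False)
   \<le> gamma sg ^ (m - 2) * (probH m sg P sig0 False * (1 - probH m sg P sig0 True))"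
proof -
  define aT where "aT = (\<Sum>i\<in>A. Nv True i * Q True i i1)"
  define aF where "aF = (\<Sum>i\<in>A. Nv False i * Q False i i1)"
  define bT where "bT = (\<Sum>i\<in>A. Nv True i * Q True i i0)"
  define bF where "bF = (\<Sum>i\<in>A. Nv False i * Q False i i0)"
  have nnA: "\<And>\<theta> j. j \<in> {1..m} \<Longrightarrow> 0 \<le> (\<Sum>i\<in>A. Nv \<theta> i * Q \<theta> i j)"
    using Nv_nonneg Q_nonneg A_range by (intro sum_nonneg mult_nonneg_nonneg) auto
  have nn: "0 \<le> aT" "0 \<le> aF" "0 \<le> bT" "0 \<le> bF" unfolding aT_def aF_def bT_def bF_def using nnA i0 i1 by auto
  have eH: "probH m sg P sig0 \<theta> = init P i1 + (\<Sum>i\<in>A. Nv \<theta> i * Q \<theta> i i1)" for \<theta>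
    unfolding probH0_Nv using Nv_eqA[OF i1] .
  have eL: "1 - probH m sg P sig0 \<theta> = init P i0 + (\<Sum>i\<in>A. Nv \<theta> i * Q \<theta> i i0)" for \<theta>
    using as_abs[of \<theta>] unfolding probL0_Nv using Nv_eqA[OF i0] by simp
  have sums: "(\<Sum>i\<in>A. Nv \<theta> i * Q \<theta> i i1) + (\<Sum>i\<in>A. Nv \<theta> i * Q \<theta> i i0) = c0" for \<theta>
    using flowabs[of \<theta>] unfolding Qa_def by (simp add: distrib_left sum.distrib)
  let ?G = "gamma sg ^ (m - 2)"
  have G1: "?G \<ge> 1" using gamma_ge1 by simp
  have core: "aT * bF \<le> ?G * (aF * bT)"
  proof (cases "A = {}")
    case True then show ?thesis unfolding aT_def aF_def bT_def bF_def by simp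
  next
    case False
    have c: "c0 > 0" using c0_pos[OF False] .
    define rM where "rM = Max (rho ` A)"
    define rm where "rm = Min (rho ` A)"
    have "rM \<in> rho ` A" unfolding rM_def using A_fin False by (intro Max_in) auto
    then obtain xM where xM: "xM \<in> A" "rho xM = rM" by auto
    have "rm \<in> rho ` A" unfolding rm_def using A_fin False by (intro Min_in) auto
    then obtain xm where xm: "xm \<in> A" "rho xm = rm" by auto
    have rMge: "rho x \<le> rM" if "x \<in> A" for x unfolding rM_def using A_fin that by (intro Max_ge) auto
    have rmle: "rm \<le> rho x" if "x \<in> A" for x unfolding rm_def using A_fin that by (intro Min_le) auto
    have rm0: "0 < rm" using rho_pos xm by force
    have rM0: "0 < rM" using rho_pos xM by force
    have chain: "rM \<le> gamma sg ^ (card A - 1) * rm"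
      using chain_bound[OF A_fin gamma_ge1 _ cut xM(1) xm(1)] rho_pos xM xm by auto
    have cardA: "card A \<le> m - 2" using card_mono[OF T_fin A_sub] card_T by simp
    have cardA1: "card A \<ge> 1" using False A_fin by (simp add: Suc_le_eq card_gt_0_iff)
    have aT_le: "aT \<le> lmax * rM * aF"
      unfolding aT_def aF_def sum_distrib_left
    proof (rule sum_mono)
      fix i assume i: "i \<in> A"
      have ir: "i \<in> {1..m}" using A_range[OF i] .
      have "Nv True i \<le> rM * Nv False i" unfolding NT_rho[OF i]
        using rMge[OF i] Nv_nonneg[OF ir] by (intro mult_right_mono) auto
      moreover have "Q True i i1 \<le> lmax * Q False i i1" using Q_le[OF ir i1] .
      moreover have "0 \<le> Nv True i" "0 \<le> Q True i i1" using Nv_nonneg[OF ir] Q_nonneg[OF ir i1] by auto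
      ultimately have "Nv True i * Q True i i1 \<le> (rM * Nv False i) * (lmax * Q False i i1)"
        using rM0 Nv_nonneg[OF ir] by (intro mult_mono) auto
      also have "\<dots> = lmax * rM * (Nv False i * Q False i i1)" by (simp add: algebra_simps)
      finally show "Nv True i * Q True i i1 \<le> lmax * rM * (Nv False i * Q False i i1)" .
    qed
    have bT_ge: "lmin * rm * bF \<le> bT"
      unfolding bT_def bF_def sum_distrib_left
    proof (rule sum_mono)
      fix i assume i: "i \<in> A"
      have ir: "i \<in> {1..m}" using A_range[OF i] .
      have "rm * Nv False i \<le> Nv True i" unfolding NT_rho[OF i]
        using rmle[OF i] Nv_nonneg[OF ir] by (intro mult_right_mono) auto
      moreover have "lmin * Q False i i0 \<le> Q True i i0" using Q_ge[OF ir i0] .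
      moreover have "0 \<le> rm * Nv False i" "0 \<le> lmin * Q False i i0"
        using rm0 Nv_nonneg[OF ir] lmin_pos Q_nonneg[OF ir i0] by auto
      ultimately have "(rm * Nv False i) * (lmin * Q False i i0) \<le> Nv True i * Q True i i0"
        by (intro mult_mono) (auto simp: Nv_nonneg[OF ir])
      then show "lmin * rm * (Nv False i * Q False i i0) \<le> Nv True i * Q True i i0" by (simp add: algebra_simps)
    qed
    have lmax0: "0 < lmax" using lmin_pos lmin_le_lmax by simp
    have s1: "aT * (bF * (lmin * rm)) \<le> (lmax * rM * aF) * (bF * (lmin * rm))"
      by (rule mult_right_mono[OF aT_le]) (use nn lmin_pos rm0 in auto)
    have s2: "(lmax * rM * aF) * (bF * (lmin * rm)) \<le> (lmax * rM * aF) * bT"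
      by (rule mult_left_mono) (use bT_ge nn lmax0 rM0 in \<open>auto simp: algebra_simps\<close>)
    have "lmax * rM \<le> (gamma sg * lmin) * (gamma sg ^ (card A - 1) * rm)"
      unfolding lmax_eq using chain gamma_ge1 lmin_pos by (intro mult_left_mono) auto
    then have s3: "(lmax * rM) * (aF * bT) \<le> ((gamma sg * lmin) * (gamma sg ^ (card A - 1) * rm)) * (aF * bT)"
      using nn by (intro mult_right_mono) auto
    have e: "((gamma sg * lmin) * (gamma sg ^ (card A - 1) * rm)) * (aF * bT) = gamma sg ^ card A * (aF * bT) * (lmin * rm)"
      using cardA1 by (simp add: algebra_simps power_eq_if)
    have "aT * bF * (lmin * rm) = aT * (bF * (lmin * rm))" by (simp add: algebra_simps)
    also have "\<dots> \<le> (lmax * rM * aF) * (bF * (lmin * rm))" by (rule s1)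
    also have "\<dots> \<le> (lmax * rM * aF) * bT" by (rule s2)
    also have "\<dots> = (lmax * rM) * (aF * bT)" by (simp add: algebra_simps)
    also have "\<dots> \<le> ((gamma sg * lmin) * (gamma sg ^ (card A - 1) * rm)) * (aF * bT)" by (rule s3)
    also have "\<dots> = gamma sg ^ card A * (aF * bT) * (lmin * rm)" by (rule e)
    finally have "aT * bF * (lmin * rm) \<le> gamma sg ^ card A * (aF * bT) * (lmin * rm)" .
    then have "aT * bF \<le> gamma sg ^ card A * (aF * bT)" using lmin_pos rm0 by simp
    also have "\<dots> \<le> ?G * (aF * bT)"
      using cardA gamma_ge1 nn by (intro mult_right_mono power_increasing) auto
    finally show ?thesis .
  qed
  have "(init P i1 + aT) * (init P i0 + bF) \<le> ?G * ((init P i1 + aF) * (init P i0 + bT))"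
    by (rule mix_region[OF G1 _ _ nn(1) nn(2) nn(3) nn(4) _ _ core, where c=c0])
      (use init_nonneg i0 i1 sums[of True] sums[of False] in \<open>auto simp: aT_def aF_def bT_def bF_def\<close>)
  moreover have "probH m sg P sig0 True * (1 - probH m sg P sig0 False) = (init P i1 + aT) * (init P i0 + bF)"
    using eH[of True] eL[of False] unfolding aT_def bF_def by simp
  moreover have "probH m sg P sig0 False * (1 - probH m sg P sig0 True) = (init P i1 + aF) * (init P i0 + bT)"
    using eH[of False] eL[of True] unfolding aF_def bT_def by simp
  ultimately show ?thesis by simp
qed

end


lemma pars_interp:
  fixes sg :: "bool \<Rightarrow> 's::finite \<Rightarrow> real"
  assumes pars: "parsimonious m P" and pos: "\<And>\<theta> s. sg \<theta> s > 0"
    and psum: "\<And>\<theta>. (\<Sum>s\<in>UNIV. sg \<theta> s) = 1"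
  shows "\<exists>i0 i1. pm m sg P i0 i1"
proof -
  have pr: "is_protocol m P" using pars unfolding parsimonious_def by blast
  obtain i0 i1 where ii: "i0 \<in> {1..m}" "i1 \<in> {1..m}" "i0 \<noteq> i1"
    "{i\<in>{1..m}. absorbing P i} = {i0, i1}" "act P i0 = 0" "act P i1 = 1"
    using pars unfolding parsimonious_def by blast
  have na: "\<And>i. i \<in> {1..m} \<Longrightarrow> \<not> absorbing P i \<Longrightarrow> transient m P i \<and> act P i = 0"
    using pars unfolding parsimonious_def by blast
  have "pm m sg P i0 i1"
    using pr pos psum ii na by unfold_locales auto
  then show ?thesis by blast
qed

lemma pm_summary:
  fixes sg :: "bool \<Rightarrow> 's::finite \<Rightarrow> real"
  assumes pmP: "pm m sg P i0 i1" and p: "0 < p" "p < 1"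
  shows "UR_val m sg p P = p * probH m sg P sig0 True + (1 - p) * (1 - probH m sg P sig0 False)"
    and "US_val m sg p P = p * probH m sg P sig0 True + (1 - p) * probH m sg P sig0 False"
    and "0 \<le> probH m sg P sig0 \<theta>" and "probH m sg P sig0 \<theta> \<le> 1"
    and "probH m sg P sig0 True * (1 - probH m sg P sig0 False)
         \<le> gamma sg ^ (m - 2) * (probH m sg P sig0 False * (1 - probH m sg P sig0 True))"
proof -
  interpret pm m sg P i0 i1 by (rule pmP)
  define x where "x = probH m sg P sig0 True"
  define y where "y = probH m sg P sig0 False"
  have L: "probL m sg P sig0 False = 1 - y" unfolding y_def using as_abs[of False] by simp
  have UR0: "UR m sg p P sig0 = p * x + (1 - p) * (1 - y)" unfolding UR_def x_def L ..
  show "UR_val m sg p P = p * probH m sg P sig0 True + (1 - p) * (1 - probH m sg P sig0 False)"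
    using UR_val_bounds[OF p] UR0 unfolding x_def y_def by (simp add: antisym)
  show "US_val m sg p P = p * probH m sg P sig0 True + (1 - p) * probH m sg P sig0 False"
    using US_val_eq p unfolding US_def by simp
  show "0 \<le> probH m sg P sig0 \<theta>" "probH m sg P sig0 \<theta> \<le> 1"
    using probH_nonneg[OF strat_sig0] probH_le1[OF strat_sig0] by auto
  show "probH m sg P sig0 True * (1 - probH m sg P sig0 False)
         \<le> gamma sg ^ (m - 2) * (probH m sg P sig0 False * (1 - probH m sg P sig0 True))"
    by (rule HC)
qed

lemma pm_harm:
  fixes sg :: "bool \<Rightarrow> 's::finite \<Rightarrow> real"
  assumes pmP: "pm m sg P i0 i1"
    and h: "\<And>i. i \<in> {1..m} \<Longrightarrow> \<not> absorbing P i \<Longrightarrow>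
        (\<Sum>j\<in>{1..m}. (\<Sum>s\<in>UNIV. sg \<theta> s * trans P i s j) * w j) = w i"
  shows "probH m sg P sig0 \<theta> * w i1 + probL m sg P sig0 \<theta> * w i0 = (\<Sum>j\<in>{1..m}. init P j * w j)"
proof -
  interpret pm m sg P i0 i1 by (rule pmP)
  have "\<forall>i\<in>T. (\<Sum>j\<in>{1..m}. Q \<theta> i j * w j) = w i"
    using h T_sub T_nabs unfolding Q_def by blast
  from harm[OF this] show ?thesis unfolding probH_eq probL_eq0 .
qed

lemma pm_as:
  fixes sg :: "bool \<Rightarrow> 's::finite \<Rightarrow> real"
  assumes pmP: "pm m sg P i0 i1"
  shows "probH m sg P sig0 \<theta> + probL m sg P sig0 \<theta> = 1"
proof -
  interpret pm m sg P i0 i1 by (rule pmP)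
  show ?thesis by (rule as_abs)
qed

lemma pm_parsimonious:
  assumes pmP: "pm m sg P i0 i1" shows "parsimonious m P"
proof -
  interpret pm m sg P i0 i1 by (rule pmP)
  show ?thesis unfolding parsimonious_def using proto i0 i1 i01 absset act0 act1 nonabs by blast
qed

lemma pm_proto: "pm m sg P i0 i1 \<Longrightarrow> is_protocol m P"
  using pm_parsimonious parsimonious_def by blast


lemma only_self_reach:
  assumes "\<And>j. edge m P a j \<Longrightarrow> j = a" "(edge m P)\<^sup>*\<^sup>* a j"
  shows "j = a"
  using assms(2) by (induction rule: rtranclp_induct) (auto dest: assms(1))

lemma sum_delta_w: "(a::nat) \<in> {1..m} \<Longrightarrow> (\<Sum>j\<in>{1..m}. (if j = a then 1 else 0) * w j) = (w a :: real)"
proof -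
  assume a: "a \<in> {1..m}"
  have "(\<Sum>j\<in>{1..m}. (if j = a then 1 else 0) * w j) = (\<Sum>j\<in>{1..m}. if j = a then w a else 0)"
    by (rule sum.cong) auto
  also have "\<dots> = w a" using a by (simp add: sum.delta)
  finally show ?thesis .
qed

definition triv :: "nat \<Rightarrow> 's protocol" where
  "triv a = \<lparr>trans = (\<lambda>i s j. if i \<le> 2 then (if j = i then 1 else 0) else (if j = 1 then 1 else 0)),
            init = (\<lambda>j. if j = a then 1 else 0), act = (\<lambda>j. if j = 2 then 1 else 0)\<rparr>"

lemma triv_pm:
  fixes sg :: "bool \<Rightarrow> 's::finite \<Rightarrow> real"
  assumes m: "m \<ge> 2" and a: "a \<in> {1..m}" and pos: "\<And>\<theta> s. sg \<theta> s > 0"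
    and psum: "\<And>\<theta>. (\<Sum>s\<in>UNIV. sg \<theta> s) = 1"
  shows "pm m sg (triv a :: 's protocol) 1 2"
proof -
  let ?P = "triv a :: 's protocol"
  have tr: "trans ?P i s j = (if i \<le> 2 then (if j = i then 1 else 0) else (if j = 1 then 1 else 0))" for i s j
    unfolding triv_def by simp
  have ind: "(\<Sum>j=1..m. if j = b then (1::real) else 0) = 1" if "b \<in> {1..m}" for b
    using that by (simp add: sum.delta)
  have row: "(\<Sum>j=1..m. trans ?P i s j) = 1" if "i \<in> {1..m}" for i s
  proof (cases "i \<le> 2")
    case True then show ?thesis unfolding tr using ind[OF that] by simp
  next
    case False then show ?thesis unfolding tr using ind[of 1] m by simp
  qed
  have proto: "is_protocol m ?P"
    unfolding is_protocol_def using row ind[OF a] by (auto simp: tr triv_def)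
  have absi: "absorbing ?P i \<longleftrightarrow> i \<le> 2" if "i \<ge> 1" for i
    unfolding absorbing_def tr using that by auto
  have absset: "{i\<in>{1..m}. absorbing ?P i} = {1, 2}" using m absi by auto
  have e1: "j = 1" if "edge m ?P 1 j" for j using that unfolding edge_def tr by (auto split: if_splits)
  have na: "transient m ?P i \<and> act ?P i = 0" if i: "i \<in> {1..m}" "\<not> absorbing ?P i" for i
  proof -
    have i3: "i > 2" using i absi by auto
    have "edge m ?P i 1" unfolding edge_def tr using i3 i m by auto
    moreover have "\<not> (edge m ?P)\<^sup>*\<^sup>* 1 i" using only_self_reach[of m ?P 1 i] e1 i3 by auto
    ultimately have "transient m ?P i" unfolding transient_def by blast
    then show ?thesis using i3 by (simp add: triv_def)
  qed
  show ?thesis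
    by unfold_locales (use proto pos psum m absset na in \<open>auto simp: triv_def\<close>)
qed

lemma triv_probH:
  fixes sg :: "bool \<Rightarrow> 's::finite \<Rightarrow> real"
  assumes m: "m \<ge> 2" and a: "a \<in> {1..m}" and pos: "\<And>\<theta> s. sg \<theta> s > 0"
    and psum: "\<And>\<theta>. (\<Sum>s\<in>UNIV. sg \<theta> s) = 1"
  shows "probH m sg (triv a :: 's protocol) sig0 \<theta> = (if a = 2 then 1 else 0)"
proof -
  let ?P = "triv a :: 's protocol"
  have pmP: "pm m sg ?P 1 2" by (rule triv_pm[OF m a pos psum])
  have absi: "absorbing ?P i \<longleftrightarrow> i \<le> 2" if "i \<ge> 1" for i
    unfolding absorbing_def triv_def using that by auto
  have "probH m sg ?P sig0 \<theta> * (if (2::nat) = 2 then 1 else 0) + probL m sg ?P sig0 \<theta> * (if (1::nat) = 2 then 1 else 0)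
      = (\<Sum>j\<in>{1..m}. init ?P j * (if j = 2 then 1 else 0))"
  proof (rule pm_harm[OF pmP])
    fix i assume i: "i \<in> {1..m}" "\<not> absorbing ?P i"
    then have i3: "i > 2" using absi by auto
    show "(\<Sum>j\<in>{1..m}. (\<Sum>s\<in>UNIV. sg \<theta> s * trans ?P i s j) * (if j = 2 then 1 else 0)) = (if i = 2 then 1 else 0)"
      using i3 by (simp add: triv_def, intro sum.neutral) auto
  qed
  moreover have "(\<Sum>j\<in>{1..m}. init ?P j * (if j = 2 then 1 else 0)) = (if a = 2 then 1 else 0)"
    unfolding triv_def using sum_delta_w[OF a, of "\<lambda>j. if j = 2 then 1 else 0"] by simp
  ultimately show ?thesis by simp
qed

lemma triv_bound:
  fixes sg :: "bool \<Rightarrow> 's::finite \<Rightarrow> real"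
  assumes m: "m \<ge> 2" and pos: "\<And>\<theta> s. sg \<theta> s > 0"
    and psum: "\<And>\<theta>. (\<Sum>s\<in>UNIV. sg \<theta> s) = 1" and p: "0 < p" "p < 1"
  shows "p \<le> UR_sup m sg p" and "1 - p \<le> UR_sup m sg p"
proof -
  have a2: "(2::nat) \<in> {1..m}" and a1: "(1::nat) \<in> {1..m}" using m by auto
  have "UR_val m sg p (triv 2 :: 's protocol) = p"
    using pm_summary(1)[OF triv_pm[OF m a2 pos psum] p] triv_probH[OF m a2 pos psum] by simp
  moreover have "UR_val m sg p (triv 2 :: 's protocol) \<le> UR_sup m sg p"
    using UR_sup_ge[OF pm_proto[OF triv_pm[OF m a2 pos psum]]] p pos psum by auto
  ultimately show "p \<le> UR_sup m sg p" by simp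
  have "UR_val m sg p (triv 1 :: 's protocol) = 1 - p"
    using pm_summary(1)[OF triv_pm[OF m a1 pos psum] p] triv_probH[OF m a1 pos psum] by simp
  moreover have "UR_val m sg p (triv 1 :: 's protocol) \<le> UR_sup m sg p"
    using UR_sup_ge[OF pm_proto[OF triv_pm[OF m a1 pos psum]]] p pos psum by auto
  ultimately show "1 - p \<le> UR_sup m sg p" by simp
qed


lemma sum_two_w:
  assumes "(a::nat) \<noteq> b" "a \<in> {1..m}" "b \<in> {1..m}"
  shows "(\<Sum>j\<in>{1..m}. (if j = a then u else if j = b then v else 0) * w j) = u * w a + v * (w b :: real)"
proof -
  have "(\<Sum>j\<in>{1..m}. (if j = a then u else if j = b then v else 0) * w j)
      = (\<Sum>j\<in>{1..m}. (if j = a then u * w a else 0) + (if j = b then v * w b else 0))"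
    using assms(1) by (intro sum.cong) auto
  also have "\<dots> = u * w a + v * w b" using assms by (simp add: sum.distrib sum.delta)
  finally show ?thesis .
qed

definition bdt :: "nat \<Rightarrow> real \<Rightarrow> real \<Rightarrow> 's \<Rightarrow> 's \<Rightarrow> nat \<Rightarrow> 's \<Rightarrow> nat \<Rightarrow> real" where
  "bdt m x y sU sD i s j =
    (if i \<le> 2 then (if j = i then 1 else 0)
     else if s = sU then (if i < m then (if j = i + 1 then 1 else 0)
                          else (if j = 2 then x else if j = i then 1 - x else 0))
     else if s = sD then (if 3 < i then (if j = i - 1 then 1 else 0)
                          else (if j = 1 then y else if j = i then 1 - y else 0))
     else (if j = i then 1 else 0))"

definition bd :: "nat \<Rightarrow> real \<Rightarrow> real \<Rightarrow> 's \<Rightarrow> 's \<Rightarrow> 's protocol" where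
  "bd m x y sU sD = \<lparr>trans = bdt m x y sU sD, init = (\<lambda>j. if j = 3 then 1 else 0),
                    act = (\<lambda>j. if j = 2 then 1 else 0)\<rparr>"

lemma bd_sum:
  assumes m: "m \<ge> 3" and i: "i \<in> {1..m}" and UD: "sU \<noteq> sD"
  shows "(\<Sum>j\<in>{1..m}. bdt m x y sU sD i s j * w j) =
    (if i \<le> 2 then w i
     else if s = sU then (if i < m then w (i + 1) else x * w 2 + (1 - x) * w i)
     else if s = sD then (if 3 < i then w (i - 1) else y * w 1 + (1 - y) * w i)
     else w i)"
proof -
  have d: "(\<Sum>j\<in>{1..m}. (if j = a then 1 else 0) * w j) = w a" if "a \<in> {1..m}" for a
    using sum_delta_w[OF that] .
  consider "i \<le> 2" | "\<not> i \<le> 2" "s = sU" "i < m" | "\<not> i \<le> 2" "s = sU" "\<not> i < m"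
    | "\<not> i \<le> 2" "s = sD" "3 < i" | "\<not> i \<le> 2" "s = sD" "\<not> 3 < i"
    | "\<not> i \<le> 2" "s \<noteq> sU" "s \<noteq> sD" by blast
  then show ?thesis
  proof cases
    case 1 then show ?thesis unfolding bdt_def using d[OF i] by simp
  next
    case 2
    have "i + 1 \<in> {1..m}" using 2 i by auto
    then show ?thesis unfolding bdt_def using 2 d[of "i+1"] by simp
  next
    case 3
    have "i \<noteq> 2" "i \<in> {1..m}" "(2::nat) \<in> {1..m}" using 3 i m by auto
    then show ?thesis unfolding bdt_def using 3 sum_two_w[of 2 i m x "1 - x" w] by simp
  next
    case 4
    have "i - 1 \<in> {1..m}" using 4 i by auto
    then show ?thesis unfolding bdt_def using 4 UD d[of "i-1"] by simp
  next
    case 5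
    have "i \<noteq> 1" "(1::nat) \<in> {1..m}" using 5 i m by auto
    then show ?thesis unfolding bdt_def using 5 UD i sum_two_w[of 1 i m y "1 - y" w] by simp
  next
    case 6 then show ?thesis unfolding bdt_def using d[OF i] by simp
  qed
qed

lemma bd_row:
  assumes m: "m \<ge> 3" and i: "i \<in> {1..m}" and UD: "sU \<noteq> sD"
  shows "(\<Sum>j=1..m. bdt m x y sU sD i s j) = 1"
  using bd_sum[OF m i UD, of x y s "\<lambda>_. 1"] by (simp add: algebra_simps)

lemma bd_reach:
  assumes m: "m \<ge> 3" and x: "0 < x" and i: "3 \<le> i" "i \<le> m"
  shows "(edge m (bd m x y sU sD))\<^sup>*\<^sup>* i m"
  using i
proof (induction "m - i" arbitrary: i)
  case 0 then show ?case by simp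
next
  case (Suc k)
  then have im: "i < m" by simp
  have "edge m (bd m x y sU sD) i (i + 1)"
    unfolding edge_def bd_def using Suc.prems im by (auto simp: bdt_def intro!: exI[of _ sU])
  moreover have "(edge m (bd m x y sU sD))\<^sup>*\<^sup>* (i + 1) m" using Suc by simp
  ultimately show ?case by (rule converse_rtranclp_into_rtranclp)
qed

lemma bd_pm:
  fixes sg :: "bool \<Rightarrow> 's::finite \<Rightarrow> real"
  assumes m: "m \<ge> 3" and x: "0 < x" "x \<le> 1" and y: "0 < y" "y \<le> 1" and UD: "sU \<noteq> sD"
    and pos: "\<And>\<theta> s. sg \<theta> s > 0" and psum: "\<And>\<theta>. (\<Sum>s\<in>UNIV. sg \<theta> s) = 1"
  shows "pm m sg (bd m x y sU sD) 1 2"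
proof -
  let ?P = "bd m x y sU sD"
  have tr: "trans ?P = bdt m x y sU sD" unfolding bd_def by simp
  have nn: "0 \<le> bdt m x y sU sD i s j" for i s j unfolding bdt_def using x y by auto
  have ind: "(\<Sum>j=1..m. if j = b then (1::real) else 0) = 1" if "b \<in> {1..m}" for b
    using that by (simp add: sum.delta)
  have proto: "is_protocol m ?P"
    unfolding is_protocol_def tr using nn bd_row[OF m _ UD] ind[of 3] m by (auto simp: bd_def)
  have absi: "absorbing ?P i \<longleftrightarrow> i \<le> 2" if "i \<ge> 1" "i \<le> m" for i
  proof
    assume a: "absorbing ?P i"
    show "i \<le> 2"
    proof (rule ccontr)
      assume "\<not> i \<le> 2"
      then have "bdt m x y sU sD i sU i \<noteq> 1" unfolding bdt_def using x by auto
      then show False using a unfolding absorbing_def tr by blast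
    qed
  qed (auto simp: absorbing_def tr bdt_def)
  have absset: "{i\<in>{1..m}. absorbing ?P i} = {1, 2}" using m absi by auto
  have e2: "j = 2" if "edge m ?P 2 j" for j using that unfolding edge_def tr bdt_def by (auto split: if_splits)
  have na: "transient m ?P i \<and> act ?P i = 0" if i: "i \<in> {1..m}" "\<not> absorbing ?P i" for i
  proof -
    have i3: "i \<ge> 3" using i absi by auto
    have "(edge m ?P)\<^sup>*\<^sup>* i m" using bd_reach[OF m x(1) i3] i by auto
    moreover have "edge m ?P m 2" unfolding edge_def tr bdt_def using m x by (auto intro!: exI[of _ sU])
    ultimately have "(edge m ?P)\<^sup>*\<^sup>* i 2" by (rule rtranclp.rtrancl_into_rtrancl)
    moreover have "\<not> (edge m ?P)\<^sup>*\<^sup>* 2 i" using only_self_reach[of m ?P 2 i] e2 i3 by auto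
    ultimately have "transient m ?P i" unfolding transient_def by blast
    then show ?thesis using i3 by (simp add: bd_def)
  qed
  show ?thesis
    by unfold_locales (use proto pos psum m absset na in \<open>auto simp: bd_def\<close>)
qed


definition bdV :: "nat \<Rightarrow> real \<Rightarrow> real \<Rightarrow> real \<Rightarrow> nat \<Rightarrow> real" where
  "bdV m x y r j = (if j = 1 then 0 else if j = 2 then 1 + y * (\<Sum>l=1..m-3. r ^ l) + y * r ^ (m - 2) / x
     else 1 + y * (\<Sum>l=1..j-3. r ^ l))"

lemma bd_harmV:
  fixes sg :: "bool \<Rightarrow> 's::finite \<Rightarrow> real" and \<theta> :: bool
  assumes m: "m \<ge> 3" and x: "0 < x" and UD: "sU \<noteq> sD"
    and pos: "\<And>\<theta> s. sg \<theta> s > 0" and psum: "\<And>\<theta>. (\<Sum>s\<in>UNIV. sg \<theta> s) = 1"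
    and i: "3 \<le> i" "i \<le> m"
  defines "r \<equiv> sg \<theta> sD / sg \<theta> sU"
  shows "(\<Sum>j\<in>{1..m}. (\<Sum>s\<in>UNIV. sg \<theta> s * bdt m x y sU sD i s j) * bdV m x y r j) = bdV m x y r i"
proof -
  let ?V = "bdV m x y r"
  define E where "E s = (\<Sum>j\<in>{1..m}. bdt m x y sU sD i s j * ?V j)" for s
  have ir: "i \<in> {1..m}" using i by auto
  have Es: "E s = (if s = sU then (if i < m then ?V (i + 1) else x * ?V 2 + (1 - x) * ?V i)
     else if s = sD then (if 3 < i then ?V (i - 1) else y * ?V 1 + (1 - y) * ?V i) else ?V i)" for s
    unfolding E_def using bd_sum[OF m ir UD, of x y s ?V] i by simp
  have lhs: "(\<Sum>j\<in>{1..m}. (\<Sum>s\<in>UNIV. sg \<theta> s * bdt m x y sU sD i s j) * ?V j) = (\<Sum>s\<in>UNIV. sg \<theta> s * E s)"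
    unfolding E_def by (simp add: sum_distrib_right sum_distrib_left mult.assoc, rule sum.swap)
  have split: "(\<Sum>s\<in>UNIV. sg \<theta> s * E s) = ?V i + (sg \<theta> sU * (E sU - ?V i) + sg \<theta> sD * (E sD - ?V i))"
  proof -
    have "(\<Sum>s\<in>UNIV. sg \<theta> s * E s) = (\<Sum>s\<in>UNIV. sg \<theta> s * ?V i) + (\<Sum>s\<in>UNIV. sg \<theta> s * (E s - ?V i))"
      by (simp add: sum.distrib[symmetric] algebra_simps)
    also have "(\<Sum>s\<in>UNIV. sg \<theta> s * ?V i) = ?V i" using psum[of \<theta>] by (simp add: sum_distrib_right[symmetric])
    also have "(\<Sum>s\<in>UNIV. sg \<theta> s * (E s - ?V i)) = (\<Sum>s\<in>{sU, sD}. sg \<theta> s * (E s - ?V i))"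
      by (rule sum.mono_neutral_right) (auto simp: Es)
    also have "\<dots> = sg \<theta> sU * (E sU - ?V i) + sg \<theta> sD * (E sD - ?V i)" using UD by simp
    finally show ?thesis .
  qed
  have VT: "?V j = 1 + y * (\<Sum>l=1..j-3. r ^ l)" if "3 \<le> j" for j
    using that unfolding bdV_def by simp
  have up: "E sU - ?V i = y * r ^ (i - 2)"
  proof (cases "i < m")
    case True
    have "i + 1 - 3 = Suc (i - 3)" "i - 2 = Suc (i - 3)" using i by auto
    then have "?V (i + 1) - ?V i = y * r ^ (i - 2)"
      using VT[of "i+1"] VT[of i] i by (simp add: algebra_simps)
    then show ?thesis using True Es[of sU] by simp
  next
    case False
    then have im: "i = m" using i by simp
    have "?V 2 - ?V m = y * r ^ (m - 2) / x" using VT[of m] m unfolding bdV_def by simp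
    then have "x * ?V 2 + (1 - x) * ?V i - ?V i = y * r ^ (i - 2)"
      using x im by (simp add: algebra_simps)
    then show ?thesis using False Es[of sU] by simp
  qed
  have down: "E sD - ?V i = - (y * r ^ (i - 3))"
  proof (cases "3 < i")
    case True
    have "i - 1 - 3 = i - 4" "i - 3 = Suc (i - 4)" using True by auto
    then have "?V (i - 1) - ?V i = - (y * r ^ (i - 3))"
      using VT[of "i-1"] VT[of i] True by (simp add: algebra_simps)
    then show ?thesis using True Es[of sD] UD by simp
  next
    case False
    then have i3: "i = 3" using i by simp
    have "?V 3 = 1" unfolding bdV_def by simp
    moreover have "?V 1 = 0" unfolding bdV_def by simp
    ultimately show ?thesis using False Es[of sD] UD i3 by (simp add: algebra_simps)
  qed
  have bal: "sg \<theta> sU * (y * r ^ (i - 2)) = sg \<theta> sD * (y * r ^ (i - 3))"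
  proof -
    have "i - 2 = Suc (i - 3)" using i by auto
    then have "sg \<theta> sU * (y * r ^ (i - 2)) = (sg \<theta> sU * r) * (y * r ^ (i - 3))" by (simp add: algebra_simps)
    also have "sg \<theta> sU * r = sg \<theta> sD" unfolding r_def using pos[of \<theta> sU] by simp
    finally show ?thesis .
  qed
  show ?thesis unfolding lhs split up down using bal by simp
qed

lemma bd_probH:
  fixes sg :: "bool \<Rightarrow> 's::finite \<Rightarrow> real" and \<theta> :: bool
  assumes m: "m \<ge> 3" and x: "0 < x" "x \<le> 1" and y: "0 < y" "y \<le> 1" and UD: "sU \<noteq> sD"
    and pos: "\<And>\<theta> s. sg \<theta> s > 0" and psum: "\<And>\<theta>. (\<Sum>s\<in>UNIV. sg \<theta> s) = 1"
  defines "r \<equiv> sg \<theta> sD / sg \<theta> sU"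
  shows "probH m sg (bd m x y sU sD) sig0 \<theta> = 1 / (1 + y * (\<Sum>l=1..m-3. r ^ l) + y * r ^ (m - 2) / x)"
proof -
  let ?P = "bd m x y sU sD"
  let ?V = "bdV m x y r"
  define V2 where "V2 = 1 + y * (\<Sum>l=1..m-3. r ^ l) + y * r ^ (m - 2) / x"
  have r0: "0 \<le> r" unfolding r_def using pos[of \<theta> sD] pos[of \<theta> sU] by (simp add: less_imp_le)
  have V2pos: "V2 > 0"
  proof -
    have "0 \<le> (\<Sum>l=1..m-3. r ^ l)" using r0 by (intro sum_nonneg) auto
    moreover have "0 \<le> y * r ^ (m - 2) / x" using r0 x y by simp
    ultimately show ?thesis unfolding V2_def using y by (smt (verit) mult_nonneg_nonneg)
  qed
  have V2eq: "?V 2 = V2" unfolding bdV_def V2_def by simp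
  have pmP: "pm m sg ?P 1 2" by (rule bd_pm[OF m x y UD pos psum])
  have absi: "absorbing ?P i" if "i \<le> 2" for i
    using that by (auto simp: absorbing_def bd_def bdt_def)
  define w where "w j = ?V j / V2" for j
  have "probH m sg ?P sig0 \<theta> * w 2 + probL m sg ?P sig0 \<theta> * w 1 = (\<Sum>j\<in>{1..m}. init ?P j * w j)"
  proof (rule pm_harm[OF pmP])
    fix i assume i: "i \<in> {1..m}" "\<not> absorbing ?P i"
    then have "\<not> i \<le> 2" using absi[of i] by blast
    then have i3: "3 \<le> i" "i \<le> m" using i by auto
    have "(\<Sum>j\<in>{1..m}. (\<Sum>s\<in>UNIV. sg \<theta> s * trans ?P i s j) * w j)
        = (\<Sum>j\<in>{1..m}. (\<Sum>s\<in>UNIV. sg \<theta> s * bdt m x y sU sD i s j) * ?V j) / V2"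
      unfolding w_def bd_def by (simp add: sum_divide_distrib)
    also have "\<dots> = w i"
    proof -
      have hv: "(\<Sum>j\<in>{1..m}. (\<Sum>s\<in>UNIV. sg \<theta> s * bdt m x y sU sD i s j) * bdV m x y (sg \<theta> sD / sg \<theta> sU) j)
          = bdV m x y (sg \<theta> sD / sg \<theta> sU) i"
        by (rule bd_harmV[OF m x(1) UD pos psum i3])
      show ?thesis unfolding w_def r_def hv ..
    qed
    finally show "(\<Sum>j\<in>{1..m}. (\<Sum>s\<in>UNIV. sg \<theta> s * trans ?P i s j) * w j) = w i" .
  qed
  moreover have "w 2 = 1" unfolding w_def V2eq using V2pos by simp
  moreover have "w 1 = 0" unfolding w_def bdV_def by simp
  moreover have "(\<Sum>j\<in>{1..m}. init ?P j * w j) = w 3"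
    unfolding bd_def using sum_delta_w[of 3 m w] m by simp
  moreover have "w 3 = 1 / V2" unfolding w_def bdV_def by simp
  ultimately show ?thesis unfolding V2_def by simp
qed


lemma inv_lower: "0 \<le> (A::real) \<Longrightarrow> 0 \<le> d \<Longrightarrow> 1 / (1 + A) - d \<le> 1 / (1 + A + d)"
proof -
  assume A: "0 \<le> A" and d: "0 \<le> d"
  have "1 / (1 + A) - 1 / (1 + A + d) = d / ((1 + A) * (1 + A + d))"
    using A d by (simp add: field_simps)
  also have "\<dots> \<le> d"
  proof -
    have "1 * 1 \<le> (1 + A) * (1 + A + d)" by (rule mult_mono) (use A d in auto)
    then have X: "1 \<le> (1 + A) * (1 + A + d)" by simp
    have "d / ((1 + A) * (1 + A + d)) \<le> d / 1" by (rule divide_left_mono) (use d X in auto)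
    then show ?thesis by simp
  qed
  finally show ?thesis by simp
qed

lemma inv_upper: "0 \<le> (A::real) \<Longrightarrow> 0 \<le> d \<Longrightarrow> 1 / (1 + A + d) \<le> 1 / (1 + A)"
  by (simp add: frac_le)

lemma bd_URsup:
  fixes sg :: "bool \<Rightarrow> 's::finite \<Rightarrow> real"
  assumes m: "m \<ge> 3" and UD: "sU \<noteq> sD" and z: "0 < z"
    and pos: "\<And>\<theta> s. sg \<theta> s > 0" and psum: "\<And>\<theta>. (\<Sum>s\<in>UNIV. sg \<theta> s) = 1"
    and p: "0 < p" "p < 1"
  defines "rT \<equiv> sg True sD / sg True sU" and "rF \<equiv> sg False sD / sg False sU"
  shows "p * (1 / (1 + z * rT ^ (m - 2))) + (1 - p) * (1 - 1 / (1 + z * rF ^ (m - 2))) \<le> UR_sup m sg p"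
proof (rule field_le_epsilon)
  fix e :: real assume e: "0 < e"
  let ?X = "p * (1 / (1 + z * rT ^ (m - 2))) + (1 - p) * (1 - 1 / (1 + z * rF ^ (m - 2)))"
  have rT0: "0 \<le> rT" unfolding rT_def using pos[of True sD] pos[of True sU] by (simp add: less_imp_le)
  have rF0: "0 \<le> rF" unfolding rF_def using pos[of False sD] pos[of False sU] by (simp add: less_imp_le)
  define ST where "ST = (\<Sum>l=1..m-3. rT ^ l)"
  define SF where "SF = (\<Sum>l=1..m-3. rF ^ l)"
  have ST0: "0 \<le> ST" unfolding ST_def using rT0 by (intro sum_nonneg) auto
  have SF0: "0 \<le> SF" unfolding SF_def using rF0 by (intro sum_nonneg) auto
  define \<delta> where "\<delta> = min 1 (min (1 / z) (e / (p * z * ST + 1)))"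
  have den: "0 < p * z * ST + 1" using p z ST0 by (smt (verit) mult_nonneg_nonneg)
  have d0: "0 < \<delta>" unfolding \<delta>_def using z e den by simp
  have d1: "\<delta> \<le> 1" unfolding \<delta>_def by simp
  have zd: "z * \<delta> \<le> 1"
  proof -
    have "\<delta> \<le> 1 / z" unfolding \<delta>_def by simp
    then show ?thesis using z by (simp add: field_simps)
  qed
  have pe: "p * z * \<delta> * ST \<le> e"
  proof -
    have "\<delta> \<le> e / (p * z * ST + 1)" unfolding \<delta>_def by simp
    then have "\<delta> * (p * z * ST + 1) \<le> e" using den by (simp add: le_divide_eq)
    moreover have "p * z * \<delta> * ST \<le> \<delta> * (p * z * ST + 1)" using d0 by (simp add: algebra_simps)
    ultimately show ?thesis by linarith
  qed
  let ?P = "bd m \<delta> (z * \<delta>) sU sD :: 's protocol"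
  have y0: "0 < z * \<delta>" using z d0 by simp
  have pmP: "pm m sg ?P 1 2" by (rule bd_pm[OF m d0 d1 y0 zd UD pos psum])
  have hT0: "probH m sg ?P sig0 True = 1 / (1 + (z * \<delta>) * (\<Sum>l=1..m-3. (sg True sD / sg True sU) ^ l)
       + (z * \<delta>) * (sg True sD / sg True sU) ^ (m - 2) / \<delta>)"
    by (rule bd_probH[OF m d0 d1 y0 zd UD pos psum])
  have hF0: "probH m sg ?P sig0 False = 1 / (1 + (z * \<delta>) * (\<Sum>l=1..m-3. (sg False sD / sg False sU) ^ l)
       + (z * \<delta>) * (sg False sD / sg False sU) ^ (m - 2) / \<delta>)"
    by (rule bd_probH[OF m d0 d1 y0 zd UD pos psum])
  have hT: "probH m sg ?P sig0 True = 1 / (1 + z * \<delta> * ST + z * rT ^ (m - 2))"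
    unfolding hT0 ST_def rT_def using d0 by simp
  have hF: "probH m sg ?P sig0 False = 1 / (1 + z * \<delta> * SF + z * rF ^ (m - 2))"
    unfolding hF0 SF_def rF_def using d0 by simp
  have A1: "0 \<le> z * rT ^ (m - 2)" "0 \<le> z * rF ^ (m - 2)" using z rT0 rF0 by auto
  have D1: "0 \<le> z * \<delta> * ST" "0 \<le> z * \<delta> * SF" using z d0 ST0 SF0 by auto
  have lT: "1 / (1 + z * rT ^ (m - 2)) - z * \<delta> * ST \<le> probH m sg ?P sig0 True"
  proof -
    have eq: "1 + z * \<delta> * ST + z * rT ^ (m - 2) = 1 + z * rT ^ (m - 2) + z * \<delta> * ST" by simp
    show ?thesis unfolding hT eq using inv_lower[OF A1(1) D1(1)] .
  qed
  have uF: "probH m sg ?P sig0 False \<le> 1 / (1 + z * rF ^ (m - 2))"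
  proof -
    have eq: "1 + z * \<delta> * SF + z * rF ^ (m - 2) = 1 + z * rF ^ (m - 2) + z * \<delta> * SF" by simp
    show ?thesis unfolding hF eq using inv_upper[OF A1(2) D1(2)] .
  qed
  have "UR_val m sg p ?P = p * probH m sg ?P sig0 True + (1 - p) * (1 - probH m sg ?P sig0 False)"
    by (rule pm_summary(1)[OF pmP p])
  also have "\<dots> \<ge> p * (1 / (1 + z * rT ^ (m - 2)) - z * \<delta> * ST) + (1 - p) * (1 - 1 / (1 + z * rF ^ (m - 2)))"
    using lT uF p by (intro add_mono mult_left_mono) auto
  finally have "?X - p * z * \<delta> * ST \<le> UR_val m sg p ?P" by (simp add: algebra_simps)
  moreover have "UR_val m sg p ?P \<le> UR_sup m sg p"
    using UR_sup_ge[OF pm_proto[OF pmP]] p pos psum by auto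
  ultimately show "?X \<le> UR_sup m sg p + e" using pe by linarith
qed


lemma region_D:
  fixes x y G :: real
  assumes G: "G \<ge> 1" and x: "0 \<le> x" "x \<le> 1" and reg: "x * (1 - y) \<le> G * (y * (1 - x))"
  shows "x \<le> y * (G - (G - 1) * x)"
  using reg by (simp add: algebra_simps)

lemma D_bounds:
  fixes x G :: real
  assumes G: "G \<ge> 1" and x: "0 \<le> x" "x \<le> 1"
  shows "1 \<le> G - (G - 1) * x" and "G - (G - 1) * x \<le> G"
proof -
  have "(G - 1) * x \<le> (G - 1) * 1" using G x by (intro mult_left_mono) auto
  then show "1 \<le> G - (G - 1) * x" by simp
  have "0 \<le> (G - 1) * x" using G x by simp
  then show "G - (G - 1) * x \<le> G" by simp
qed

lemma F_le_h:
  fixes x y G p :: real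
  assumes G: "G \<ge> 1" and x: "0 \<le> x" "x \<le> 1" and reg: "x * (1 - y) \<le> G * (y * (1 - x))"
    and p: "p < 1"
  shows "p * x - (1 - p) * y \<le> p * x - (1 - p) * (x / (G - (G - 1) * x))"
proof -
  let ?D = "G - (G - 1) * x"
  have D1: "1 \<le> ?D" using D_bounds[OF G x] by simp
  have "x \<le> y * ?D" using region_D[OF G x reg] .
  then have "x / ?D \<le> y" using D1 by (simp add: divide_le_eq)
  then have "(1 - p) * (x / ?D) \<le> (1 - p) * y" using p by (intro mult_left_mono) auto
  then show ?thesis by linarith
qed

lemma interior_bound:
  fixes x y G p :: real
  assumes G: "G > 1" and x: "0 \<le> x" "x \<le> 1" and reg: "x * (1 - y) \<le> G * (y * (1 - x))"
    and p: "0 < p" "p < 1"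
    and Ds: "Ds > 0" "p * Ds ^ 2 = (1 - p) * G"
    and xs: "xs = (G - Ds) / (G - 1)"
  shows "p * x - (1 - p) * y \<le> (p * xs - (1 - p) * (xs / Ds)) - p * (G - 1) / G * (x - xs) ^ 2"
proof -
  define D where "D = G - (G - 1) * x"
  have D1: "1 \<le> D" "D \<le> G" unfolding D_def using D_bounds[OF _ x] G by auto
  have Dsdef: "Ds = G - (G - 1) * xs" unfolding xs using G by (simp add: field_simps)
  have a: "x * Ds - xs * D = G * (x - xs)" unfolding D_def Dsdef by (simp add: algebra_simps)
  have c: "x / D - xs / Ds = G * (x - xs) / (D * Ds)"
    using a D1 Ds(1) by (simp add: field_simps)
  have b: "(1 - p) * G = p * Ds ^ 2" using Ds(2) by simp
  have d: "(1 - p) * (x / D - xs / Ds) = p * Ds * (x - xs) / D"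
  proof -
    have "(1 - p) * (x / D - xs / Ds) = ((1 - p) * G) * (x - xs) / (D * Ds)" unfolding c by simp
    also have "\<dots> = p * Ds ^ 2 * (x - xs) / (D * Ds)" unfolding b ..
    also have "\<dots> = p * Ds * (x - xs) / D" using Ds(1) D1 by (simp add: power2_eq_square field_simps)
    finally show ?thesis .
  qed
  have e: "Ds - D = (G - 1) * (x - xs)" unfolding D_def Dsdef by (simp add: algebra_simps)
  have f: "p * Ds * (x - xs) / D = p * (x - xs) + p * (G - 1) * (x - xs) ^ 2 / D"
  proof -
    have "p * Ds * (x - xs) = p * D * (x - xs) + p * (Ds - D) * (x - xs)" by (simp add: algebra_simps)
    also have "\<dots> = p * D * (x - xs) + p * (G - 1) * (x - xs) ^ 2" unfolding e by (simp add: power2_eq_square algebra_simps)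
    finally show ?thesis using D1 by (simp add: field_simps)
  qed
  have g: "p * (G - 1) * (x - xs) ^ 2 / G \<le> p * (G - 1) * (x - xs) ^ 2 / D"
    using D1 G p by (intro divide_left_mono) auto
  have "p * x - (1 - p) * y \<le> p * x - (1 - p) * (x / D)" using F_le_h[OF _ x reg p(2)] G unfolding D_def by simp
  also have "\<dots> = (p * xs - (1 - p) * (xs / Ds)) - (p * Ds * (x - xs) / D - p * (x - xs))"
    using d by (simp add: algebra_simps)
  also have "\<dots> = (p * xs - (1 - p) * (xs / Ds)) - p * (G - 1) * (x - xs) ^ 2 / D" unfolding f by simp
  also have "\<dots> \<le> (p * xs - (1 - p) * (xs / Ds)) - p * (G - 1) * (x - xs) ^ 2 / G" using g by simp
  finally show ?thesis by simp
qed

lemma corner_bound: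
  fixes x y G p :: real
  assumes G: "G \<ge> 1" and x: "0 \<le> x" "x \<le> 1" and reg: "x * (1 - y) \<le> G * (y * (1 - x))"
    and p: "1/2 < p" "p < 1" and Gt: "(1 - p) * G \<le> p"
  shows "p * x - (1 - p) * y \<le> (2 * p - 1) - (2 * p - 1) * (1 - x) ^ 2"
proof -
  define D where "D = G - (G - 1) * x"
  have D1: "1 \<le> D" "D \<le> G" unfolding D_def using D_bounds[OF G x] by auto
  have h: "p * x - (1 - p) * y \<le> p * x - (1 - p) * (x / D)" using F_le_h[OF G x reg p(2)] unfolding D_def .
  have a: "x / D - 1 = G * (x - 1) / D" using D1 unfolding D_def by (simp add: field_simps)
  have "p * x - (1 - p) * (x / D) = (2 * p - 1) - (1 - x) * (p - (1 - p) * G / D)"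
  proof -
    define q where "q = G / D"
    have a': "x / D = 1 + q * (x - 1)" using a unfolding q_def by simp
    have q': "(1 - p) * G / D = (1 - p) * q" unfolding q_def by simp
    show ?thesis unfolding a' q' by (simp add: algebra_simps)
  qed
  moreover have "p - (1 - p) * G / D \<ge> (2 * p - 1) * (1 - x)"
  proof -
    have i1: "p - (1 - p) * G / D = (p - (1 - p) * G) + (1 - p) * G * (D - 1) / D"
      using D1 by (simp add: field_simps)
    have i2: "D - 1 = (G - 1) * (1 - x)" unfolding D_def by (simp add: algebra_simps)
    have i3: "(1 - p) * G * (D - 1) / D \<ge> (1 - p) * (G - 1) * (1 - x)"
    proof -
      have "(1 - p) * G * (D - 1) / D = (1 - p) * (G - 1) * (1 - x) * (G / D)" unfolding i2 by simp
      moreover have "G / D \<ge> 1" using D1 by simp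
      moreover have "0 \<le> (1 - p) * (G - 1) * (1 - x)" using p G x by simp
      ultimately show ?thesis by (metis mult_le_cancel_left1 order.strict_iff_not not_le mult_left_mono mult_1_right)
    qed
    have i4: "p - (1 - p) * G \<ge> (p - (1 - p) * G) * (1 - x)"
      using Gt x by (simp add: mult_left_le)
    have "(p - (1 - p) * G) * (1 - x) + (1 - p) * (G - 1) * (1 - x) = (2 * p - 1) * (1 - x)"
      by (simp add: algebra_simps)
    then show ?thesis using i1 i3 i4 by linarith
  qed
  then have "(1 - x) * (p - (1 - p) * G / D) \<ge> (1 - x) * ((2 * p - 1) * (1 - x))"
    using x by (intro mult_left_mono) auto
  ultimately show ?thesis using h by (simp add: power2_eq_square algebra_simps)
qed


lemma conv_sq:
  fixes F a :: "nat \<Rightarrow> real"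
  assumes c: "c > 0" and b: "\<And>n. F n \<le> V - c * (a n - L) ^ 2" and F: "F \<longlonglongrightarrow> V"
  shows "a \<longlonglongrightarrow> L"
proof -
  have u: "(\<lambda>n. (V - F n) / c) \<longlonglongrightarrow> (V - V) / c"
    by (intro tendsto_divide tendsto_diff tendsto_const F) (use c in auto)
  have s: "(\<lambda>n. (a n - L) ^ 2) \<longlonglongrightarrow> 0"
  proof (rule tendsto_sandwich[of "\<lambda>_. 0" _ _ "\<lambda>n. (V - F n) / c"])
    show "\<forall>\<^sub>F n in sequentially. 0 \<le> (a n - L) ^ 2" by simp
    have "(a n - L) ^ 2 \<le> (V - F n) / c" for n
    proof -
      have "c * (a n - L) ^ 2 \<le> V - F n" using b[of n] by linarith
      then show ?thesis using c by (simp add: le_divide_eq mult.commute)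
    qed
    then show "\<forall>\<^sub>F n in sequentially. (a n - L) ^ 2 \<le> (V - F n) / c"
      by (intro always_eventually allI)
    show "(\<lambda>n. 0) \<longlonglongrightarrow> 0" by simp
    show "(\<lambda>n. (V - F n) / c) \<longlonglongrightarrow> 0" using u by simp
  qed
  have "(\<lambda>n. sqrt ((a n - L) ^ 2)) \<longlonglongrightarrow> sqrt 0" by (intro tendsto_real_sqrt s)
  then have "(\<lambda>n. \<bar>a n - L\<bar>) \<longlonglongrightarrow> 0" by simp
  then have "(\<lambda>n. a n - L) \<longlonglongrightarrow> 0" by (simp add: tendsto_rabs_zero_iff)
  then show ?thesis by (rule LIM_zero_cancel)
qed

theorem theorem3:
  fixes m :: nat and sg :: "bool \<Rightarrow> 's::finite \<Rightarrow> real" and p :: real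
    and P :: "nat \<Rightarrow> 's protocol"
  assumes m: "m \<ge> 2"
    and p: "0 < p" "p < 1"
    and pi_pos: "\<And>\<theta> s. sg \<theta> s > 0"
    and pi_sum: "\<And>\<theta>. (\<Sum>s\<in>UNIV. sg \<theta> s) = 1"
    and pi_ne: "sg True \<noteq> sg False"
    and pars: "\<And>n. parsimonious m (P n)"
    and opt: "(\<lambda>n. UR_val m sg p (P n)) \<longlonglongrightarrow> UR_sup m sg p"
    and excl: "\<not> (gamma sg ^ (m - 2) \<le> kappa p \<and> p = 1/2)"
  shows "(\<lambda>n. US_val m sg p (P n)) \<longlonglongrightarrow>
           (if gamma sg ^ (m - 2) > kappa p then p + (2 * p - 1) / (gamma sg ^ (m - 2) - 1)
            else if p > 1/2 then 1 else 0)"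
proof -
  interpret g0: gm m sg "P 0" using pars[of 0] pi_pos pi_sum unfolding parsimonious_def by unfold_locales auto
  define G where "G = gamma sg ^ (m - 2)"
  have G1: "G \<ge> 1" unfolding G_def using g0.gamma_ge1 by simp
  define xs where "xs n = probH m sg (P n) sig0 True" for n
  define ys where "ys n = probH m sg (P n) sig0 False" for n
  have facts: "0 \<le> xs n \<and> xs n \<le> 1 \<and> 0 \<le> ys n \<and> ys n \<le> 1 \<and> xs n * (1 - ys n) \<le> G * (ys n * (1 - xs n)) \<and>
      UR_val m sg p (P n) = p * xs n + (1 - p) * (1 - ys n) \<and> US_val m sg p (P n) = p * xs n + (1 - p) * ys n" for n
  proof -
    obtain i0 i1 where pmP: "pm m sg (P n) i0 i1" using pars_interp[of m "P n" sg] pars[of n] pi_pos pi_sum by blast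
    show ?thesis using pm_summary[OF pmP p] unfolding xs_def ys_def G_def by auto
  qed
  define F where "F n = p * xs n - (1 - p) * ys n" for n
  have URF: "UR_val m sg p (P n) = F n + (1 - p)" for n using facts[of n] unfolding F_def by (simp add: algebra_simps)
  have USF: "US_val m sg p (P n) = 2 * p * xs n - F n" for n using facts[of n] unfolding F_def by (simp add: algebra_simps)
  have Flim: "F \<longlonglongrightarrow> V" if up: "\<And>n. F n \<le> V" and lo: "V + (1 - p) \<le> UR_sup m sg p" for V
  proof -
    have "UR_sup m sg p \<le> V + (1 - p)"
      by (rule LIMSEQ_le_const2[OF opt]) (use up URF in auto)
    then have eq: "UR_sup m sg p = V + (1 - p)" using lo by simp
    have "(\<lambda>n. UR_val m sg p (P n) - (1 - p)) \<longlonglongrightarrow> UR_sup m sg p - (1 - p)"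
      by (intro tendsto_diff opt tendsto_const)
    then show ?thesis unfolding URF eq by simp
  qed
  have kap1: "kappa p \<ge> 1"
  proof (cases "p \<le> 1/2")
    case True then have "(1 - p) / p \<ge> 1" using p by (simp add: le_divide_eq)
    then show ?thesis unfolding kappa_def by simp
  next
    case False then have "p / (1 - p) \<ge> 1" using p by (simp add: le_divide_eq)
    then show ?thesis unfolding kappa_def by simp
  qed
  have reg: "xs n * (1 - ys n) \<le> G * (ys n * (1 - xs n))" for n using facts by blast
  have xb: "0 \<le> xs n" "xs n \<le> 1" "0 \<le> ys n" "ys n \<le> 1" for n using facts by auto
  show ?thesis
  proof (cases "G > kappa p")
    case True
    have Gk1: "(1 - p) * G > p"
    proof -
      have "p / (1 - p) < G" using True unfolding kappa_def by simp
      then show ?thesis using p by (simp add: divide_less_eq mult.commute)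
    qed
    have Gk2: "p * G > 1 - p"
    proof -
      have "(1 - p) / p < G" using True unfolding kappa_def by simp
      then show ?thesis using p by (simp add: divide_less_eq mult.commute)
    qed
    have Gg1: "G > 1" using True kap1 by simp
    define Ds where "Ds = sqrt ((1 - p) * G / p)"
    have DsA: "(1 - p) * G / p > 0" using p G1 by simp
    have Ds0: "Ds > 0" unfolding Ds_def using DsA by simp
    have Ds2: "Ds ^ 2 = (1 - p) * G / p" unfolding Ds_def using DsA by simp
    have pDs: "p * Ds ^ 2 = (1 - p) * G" unfolding Ds2 using p by simp
    have Ds1: "Ds > 1"
    proof -
      have "Ds ^ 2 > 1 ^ 2" unfolding Ds2 using Gk1 p by (simp add: less_divide_eq)
      then show ?thesis using Ds0 by (meson power_less_imp_less_base less_imp_le)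
    qed
    have DsG: "Ds < G"
    proof -
      have "(1 - p) * G < (p * G) * G" using Gk2 Gg1 by (intro mult_strict_right_mono) auto
      then have "(1 - p) * G / p < G * G" using p by (simp add: divide_less_eq algebra_simps)
      then have "Ds ^ 2 < G ^ 2" unfolding Ds2 by (simp add: power2_eq_square)
      then show ?thesis using Gg1 by (meson power_less_imp_less_base less_imp_le less_trans zero_less_one)
    qed
    define xst where "xst = (G - Ds) / (G - 1)"
    have xst0: "0 < xst" unfolding xst_def using DsG Gg1 by simp
    have xst1: "xst < 1" unfolding xst_def using Ds1 Gg1 by (simp add: divide_less_eq)
    have Dsx: "Ds = G - (G - 1) * xst" unfolding xst_def using Gg1 by (simp add: field_simps)
    define V where "V = p * xst - (1 - p) * (xst / Ds)"
    define c where "c = p * (G - 1) / G"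
    have c0: "c > 0" unfolding c_def using p Gg1 by simp
    have bnd: "F n \<le> V - c * (xs n - xst) ^ 2" for n
      using interior_bound[OF Gg1 xb(1,2) reg p Ds0 pDs xst_def] unfolding F_def V_def c_def
      by (simp add: algebra_simps)
    have up: "F n \<le> V" for n using bnd[of n] c0 by (smt (verit) mult_nonneg_nonneg zero_le_power2)
    have lo: "V + (1 - p) \<le> UR_sup m sg p"
    proof -
      have k1: "m - 2 \<ge> 1"
      proof (rule ccontr)
        assume "\<not> m - 2 \<ge> 1"
        then have "m - 2 = 0" by simp
        then show False using Gg1 unfolding G_def by simp
      qed
      then have m3: "m \<ge> 3" by simp
      have "g0.lmax \<in> range (\<lambda>s. sg True s / sg False s)" unfolding g0.lmax_def by (intro Max_in) auto
      then obtain sU where sU: "sg True sU / sg False sU = g0.lmax" by auto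
      have "g0.lmin \<in> range (\<lambda>s. sg True s / sg False s)" unfolding g0.lmin_def by (intro Min_in) auto
      then obtain sD where sD: "sg True sD / sg False sD = g0.lmin" by auto
      have gam1: "gamma sg \<noteq> 1"
      proof
        assume "gamma sg = 1" then show False using Gg1 unfolding G_def by simp
      qed
      have UD: "sU \<noteq> sD"
      proof
        assume "sU = sD"
        then have "g0.lmax = g0.lmin" using sU sD by simp
        then show False using gam1 g0.lmin_pos unfolding g0.gamma_eq by simp
      qed
      define rT where "rT = sg True sD / sg True sU"
      define rF where "rF = sg False sD / sg False sU"
      have rT0: "rT > 0" unfolding rT_def using pi_pos by simp
      have rFg: "rF = gamma sg * rT"
      proof -
        have "gamma sg = (sg True sU / sg False sU) / (sg True sD / sg False sD)"
          unfolding g0.gamma_eq sU sD ..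
        then show ?thesis unfolding rF_def rT_def using pi_pos[of True sU] pi_pos[of False sU]
            pi_pos[of True sD] pi_pos[of False sD] by (simp add: field_simps)
      qed
      define z where "z = (1 / xst - 1) / rT ^ (m - 2)"
      have z0: "z > 0" unfolding z_def using xst0 xst1 rT0 by (simp add: field_simps)
      have e1: "1 + z * rT ^ (m - 2) = 1 / xst" unfolding z_def using rT0 by simp
      have e2: "1 + z * rF ^ (m - 2) = Ds / xst"
      proof -
        have "rF ^ (m - 2) = G * rT ^ (m - 2)" unfolding rFg G_def by (simp add: power_mult_distrib)
        then have "1 + z * rF ^ (m - 2) = 1 + (1 / xst - 1) * G" unfolding z_def using rT0 by simp
        also have "\<dots> = Ds / xst" unfolding Dsx using xst0 by (simp add: field_simps)
        finally show ?thesis .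
      qed
      have "p * (1 / (1 + z * rT ^ (m - 2))) + (1 - p) * (1 - 1 / (1 + z * rF ^ (m - 2))) \<le> UR_sup m sg p"
        unfolding rT_def rF_def by (rule bd_URsup[OF m3 UD z0 pi_pos pi_sum p])
      then show ?thesis unfolding e1 e2 V_def by (simp add: algebra_simps)
    qed
    have FV: "F \<longlonglongrightarrow> V" by (rule Flim[OF up lo])
    have xlim: "xs \<longlonglongrightarrow> xst" by (rule conv_sq[OF c0 bnd FV])
    have "(\<lambda>n. US_val m sg p (P n)) \<longlonglongrightarrow> 2 * p * xst - V"
      unfolding USF by (intro tendsto_diff tendsto_mult tendsto_const xlim FV)
    moreover have "2 * p * xst - V = p + (2 * p - 1) / (G - 1)"
    proof -
      have f1: "(1 - p) * (xst / Ds) = (p * Ds - (1 - p)) / (G - 1)"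
      proof -
        have "(1 - p) * (xst / Ds) = ((1 - p) * G - (1 - p) * Ds) / ((G - 1) * Ds)"
          unfolding xst_def using Gg1 Ds0 by (simp add: field_simps)
        also have "\<dots> = (p * Ds ^ 2 - (1 - p) * Ds) / ((G - 1) * Ds)" unfolding pDs ..
        also have "\<dots> = (p * Ds - (1 - p)) / (G - 1)" using Ds0 Gg1 by (simp add: field_simps power2_eq_square)
        finally show ?thesis .
      qed
      have f2: "p * xst = (p * G - p * Ds) / (G - 1)" unfolding xst_def by (simp add: algebra_simps)
      have "2 * p * xst - V = p * xst + (1 - p) * (xst / Ds)" unfolding V_def by simp
      also have "\<dots> = (p * G - p * Ds) / (G - 1) + (p * Ds - (1 - p)) / (G - 1)" unfolding f1 f2 ..
      finally have "2 * p * xst - V = (p * G - p * Ds) / (G - 1) + (p * Ds - (1 - p)) / (G - 1)" .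
      also have "\<dots> = ((p * G - p * Ds) + (p * Ds - (1 - p))) / (G - 1)" by (rule add_divide_distrib[symmetric])
      also have "\<dots> = (p * G - (1 - p)) / (G - 1)" by simp
      finally have "2 * p * xst - V = (p * G - (1 - p)) / (G - 1)" .
      also have "\<dots> = p + (2 * p - 1) / (G - 1)" using Gg1 by (simp add: field_simps)
      finally show ?thesis .
    qed
    ultimately show ?thesis using True unfolding G_def by simp
  next
    case False
    show ?thesis
    proof (cases "p > 1/2")
      case True
      have kp: "kappa p = p / (1 - p)"
      proof -
        have "(1 - p) / p \<le> 1" using True p by (simp add: divide_le_eq)
        moreover have "1 \<le> p / (1 - p)" using True p by (simp add: le_divide_eq)
        ultimately have "(1 - p) / p \<le> p / (1 - p)" by linarith
        then show ?thesis unfolding kappa_def by simp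
      qed
      have Gt: "(1 - p) * G \<le> p" using False p unfolding kp by (simp add: not_less le_divide_eq mult.commute)
      have bnd: "F n \<le> (2 * p - 1) - (2 * p - 1) * (xs n - 1) ^ 2" for n
        using corner_bound[OF G1 xb(1,2) reg _ p(2) Gt] True unfolding F_def
        by (simp add: power2_commute)
      have c0: "2 * p - 1 > 0" using True by simp
      have up: "F n \<le> 2 * p - 1" for n using bnd[of n] c0 by (smt (verit) mult_nonneg_nonneg zero_le_power2)
      have lo: "(2 * p - 1) + (1 - p) \<le> UR_sup m sg p" using triv_bound(1)[OF m pi_pos pi_sum p] by simp
      have FV: "F \<longlonglongrightarrow> 2 * p - 1" by (rule Flim[OF up lo])
      have xlim: "xs \<longlonglongrightarrow> 1" by (rule conv_sq[OF c0 bnd FV])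
      have "(\<lambda>n. US_val m sg p (P n)) \<longlonglongrightarrow> 2 * p * 1 - (2 * p - 1)"
        unfolding USF by (intro tendsto_diff tendsto_mult tendsto_const xlim FV)
      then show ?thesis using False True unfolding G_def by simp
    next
      case nh: False
      have plt: "p < 1/2" using nh excl False unfolding G_def by auto
      have kp: "kappa p = (1 - p) / p"
      proof -
        have "p / (1 - p) \<le> 1" using plt p by (simp add: divide_le_eq)
        moreover have "1 \<le> (1 - p) / p" using plt p by (simp add: le_divide_eq)
        ultimately have "p / (1 - p) \<le> (1 - p) / p" by linarith
        then show ?thesis unfolding kappa_def by simp
      qed
      have Gt: "(1 - (1 - p)) * G \<le> 1 - p" using False p unfolding kp by (simp add: not_less le_divide_eq mult.commute)
      have bnd: "F n \<le> 0 - (1 - 2 * p) * (ys n - 0) ^ 2" for n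
      proof -
        have x': "0 \<le> 1 - ys n" "1 - ys n \<le> 1" using xb[of n] by auto
        have reg': "(1 - ys n) * (1 - (1 - xs n)) \<le> G * ((1 - xs n) * (1 - (1 - ys n)))"
          using reg[of n] by (simp add: algebra_simps)
        have "(1 - p) * (1 - ys n) - (1 - (1 - p)) * (1 - xs n) \<le> (2 * (1 - p) - 1) - (2 * (1 - p) - 1) * (1 - (1 - ys n)) ^ 2"
          by (rule corner_bound[OF G1 x' reg' _ _ Gt]) (use plt p in auto)
        then show ?thesis unfolding F_def by (simp add: algebra_simps)
      qed
      have c0: "1 - 2 * p > 0" using plt by simp
      have up: "F n \<le> 0" for n using bnd[of n] c0 by (smt (verit) mult_nonneg_nonneg zero_le_power2)
      have lo: "0 + (1 - p) \<le> UR_sup m sg p" using triv_bound(2)[OF m pi_pos pi_sum p] by simp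
      have FV: "F \<longlonglongrightarrow> 0" by (rule Flim[OF up lo])
      have ylim: "ys \<longlonglongrightarrow> 0" by (rule conv_sq[OF c0 bnd FV])
      have xeq: "xs n = (F n + (1 - p) * ys n) / p" for n unfolding F_def using p by (simp add: field_simps)
      have xlim: "xs \<longlonglongrightarrow> (0 + (1 - p) * 0) / p"
        unfolding xeq by (intro tendsto_divide tendsto_add tendsto_mult tendsto_const FV ylim) (use p in auto)
      have "(\<lambda>n. US_val m sg p (P n)) \<longlonglongrightarrow> p * 0 + (1 - p) * 0"
        using facts xlim ylim by (simp only: ) (intro tendsto_add tendsto_mult tendsto_const, auto)
      then show ?thesis using False nh unfolding G_def by simp
    qed
  qed
qed


end
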